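(* Let $\phi:B_E\to B_E$ be analytic, write $\phi=\sum_{k\in\Gamma}\phi_k e_k$ with $\phi_k=\langle\phi,e_k\rangle$, and assume that $C_\phi:\mathcal B(B_E)\to \mathcal B(B_E)$ is compact. Then: (a) for all $k,l\in \Gamma$, the composition operator $C_{\phi_{k,l}}:\mathcal B\to\mathcal B$ is compact, where $\phi_{k,l}(\lambda)=\phi_k(\lambda e_l)$, $\lambda\in\mathbb D$; (b) $\displaystyle\lim_{k\in \Gamma} \sup_{z\in B_E} \frac{(1-\|z\|^2)|\mathcal R\phi_k(z)|}{1-|\phi_k(z)|^2}=0$; in particular $\lim_{k\in \Gamma} \|\phi_k\|_{\mathcal B(B_E)}=0$; (c) for every $n\in\Gamma$, $\displaystyle\lim_{|\phi_n(z)|\to 1} \frac{(1-\|z\|^2)|\mathcal R\phi_n(z)|}{1-|\phi_n(z)|^2}=0$.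
   Context: $E$ is a complex Hilbert space of arbitrary dimension with inner product $\langle\cdot,\cdot\rangle$, open unit ball $B_E$ and a fixed orthonormal basis $(e_k)_{k\in\Gamma}$; $\mathbb D$ is the open unit disc. $\lim_{k\in\Gamma}a_k=0$ means that for every $\varepsilon>0$ the set $\{k\in\Gamma:|a_k|\ge\varepsilon\}$ is finite. $\lim_{|\phi_n(z)|\to1}Q(z)=0$ means that for every $\varepsilon>0$ there is $r<1$ with $|Q(z)|<\varepsilon$ whenever $|\phi_n(z)|>r$. For analytic $g$ on $B_E$, $\mathcal Rg(x)=g'(x)(x)$. The Bloch space $\mathcal B(B_E)$ consists of analytic $f:B_E\to\mathbb C$ with $\|f\|_{\mathcal B(B_E)}=\sup_{x\in B_E}(1-\|x\|^2)\|f'(x)\|<\infty$, normed by $\|f\|_{Bloch(B_E)}=|f(0)|+\|f\|_{inv}$ where $\|f\|_{inv}=\sup_{x}\|\nabla(f\circ\varphi_x)(0)\|$ ($\nabla g(x)$ the vector representing $g'(x)$, $\varphi_a(y)=(s_aQ_a+P_a)\big(\frac{a-y}{1-\langle y,a\rangle}\big)$ the Möbius automorphism, $s_a=\sqrt{1-\|a\|^2}$, $P_a$ the orthogonal projection onto $\mathbb Ca$, $Q_a=I-P_a$). $C_\phi f=f\circ\phi$. The classical Bloch space $\mathcal B$ is the space of analytic $F:\mathbb D\to\mathbb C$ with $\|F\|_{\mathcal B}=\sup_{z\in\mathbb D}(1-|z|^2)|F'(z)|<\infty$, normed by $|F(0)|+\|F\|_{\mathcal B}$; for analytic $\psi:\mathbb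 D\to\mathbb D$, $C_\psi F=F\circ\psi$. *)

theory Defs
  imports "HOL-Analysis.Analysis" "HOL-Complex_Analysis.Complex_Analysis"
begin

text \<open>Model of the complex Hilbert space E with orthonormal basis indexed by the
type 'g: E = l2('g), vectors are square-summable functions 'g \<Rightarrow> complex,
and e k is the k-th unit vector.\<close>

type_synonym 'g vec = "'g \<Rightarrow> complex"

definition is_l2 :: "'g vec \<Rightarrow> bool" where
  "is_l2 x \<longleftrightarrow> (\<lambda>k. (cmod (x k))\<^sup>2) summable_on UNIV"

definition l2norm :: "'g vec \<Rightarrow> real" where
  "l2norm x = sqrt (\<Sum>\<^sub>\<infinity>k. (cmod (x k))\<^sup>2)"

definition l2inner :: "'g vec \<Rightarrow> 'g vec \<Rightarrow> complex" where
  "l2inner x y = (\<Sum>\<^sub>\<infinity>k. x k * cnj (y k))"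

definition vadd :: "'g vec \<Rightarrow> 'g vec \<Rightarrow> 'g vec" where
  "vadd x y = (\<lambda>k. x k + y k)"

definition vsub :: "'g vec \<Rightarrow> 'g vec \<Rightarrow> 'g vec" where
  "vsub x y = (\<lambda>k. x k - y k)"

definition smul :: "complex \<Rightarrow> 'g vec \<Rightarrow> 'g vec" where
  "smul c x = (\<lambda>k. c * x k)"

definition zerovec :: "'g vec" where
  "zerovec = (\<lambda>k. 0)"

definition basis_vec :: "'g \<Rightarrow> 'g vec" where
  "basis_vec l = (\<lambda>k. if k = l then 1 else 0)"

definition BE :: "'g vec set" where
  "BE = {x. is_l2 x \<and> l2norm x < 1}"

text \<open>Analyticity (= Frechet holomorphy) of a scalar function on B_E:
existence at each point of a bounded complex-linear derivative.\<close>
definition hol_fun :: "('g vec \<Rightarrow> complex) \<Rightarrow> bool" where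
  "hol_fun f \<longleftrightarrow> (\<forall>a\<in>BE. \<exists>L :: 'g vec \<Rightarrow> complex.
      (\<forall>x y. is_l2 x \<longrightarrow> is_l2 y \<longrightarrow> L (vadd x y) = L x + L y) \<and>
      (\<forall>c x. is_l2 x \<longrightarrow> L (smul c x) = c * L x) \<and>
      (\<exists>C. \<forall>x. is_l2 x \<longrightarrow> cmod (L x) \<le> C * l2norm x) \<and>
      (\<forall>\<epsilon>>0. \<exists>\<delta>>0. \<forall>h. is_l2 h \<and> l2norm h < \<delta> \<longrightarrow>
          cmod (f (vadd a h) - f a - L h) \<le> \<epsilon> * l2norm h))"

text \<open>Gradient: the vector representing f'(a) (Riesz), i.e. f'(a)(h) = <h, grad f a>.\<close>
definition grad :: "('g vec \<Rightarrow> complex) \<Rightarrow> 'g vec \<Rightarrow> 'g vec" where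
  "grad f a = (THE v. is_l2 v \<and>
      (\<forall>\<epsilon>>0. \<exists>\<delta>>0. \<forall>h. is_l2 h \<and> l2norm h < \<delta> \<longrightarrow>
          cmod (f (vadd a h) - f a - l2inner h v) \<le> \<epsilon> * l2norm h))"

definition radial :: "('g vec \<Rightarrow> complex) \<Rightarrow> 'g vec \<Rightarrow> complex" where
  "radial g x = l2inner x (grad g x)"

definition hol_selfmap :: "('g vec \<Rightarrow> 'g vec) \<Rightarrow> bool" where
  "hol_selfmap \<phi> \<longleftrightarrow> (\<forall>x\<in>BE. \<phi> x \<in> BE) \<and>
    (\<forall>a\<in>BE. \<exists>T :: 'g vec \<Rightarrow> 'g vec.
      (\<forall>x. is_l2 x \<longrightarrow> is_l2 (T x)) \<and>
      (\<forall>x y. is_l2 x \<longrightarrow> is_l2 y \<longrightarrow> T (vadd x y) = vadd (T x) (T y)) \<and>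
      (\<forall>c x. is_l2 x \<longrightarrow> T (smul c x) = smul c (T x)) \<and>
      (\<exists>C. \<forall>x. is_l2 x \<longrightarrow> l2norm (T x) \<le> C * l2norm x) \<and>
      (\<forall>\<epsilon>>0. \<exists>\<delta>>0. \<forall>h. is_l2 h \<and> l2norm h < \<delta> \<longrightarrow>
          l2norm (vsub (vsub (\<phi> (vadd a h)) (\<phi> a)) (T h)) \<le> \<epsilon> * l2norm h))"

definition bloch_semi :: "('g vec \<Rightarrow> complex) \<Rightarrow> ereal" where
  "bloch_semi f = (SUP x\<in>BE. ereal ((1 - (l2norm x)\<^sup>2) * l2norm (grad f x)))"

definition bloch_space :: "('g vec \<Rightarrow> complex) set" where
  "bloch_space = {f. hol_fun f \<and> bloch_semi f < \<infinity>}"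

text \<open>Moebius automorphism phi_a(y) = (s_a Q_a + P_a)((a - y)/(1 - <y,a>)).\<close>
definition projP :: "'g vec \<Rightarrow> 'g vec \<Rightarrow> 'g vec" where
  "projP a w = (if a = zerovec then zerovec
               else smul (l2inner w a / complex_of_real ((l2norm a)\<^sup>2)) a)"

definition mobius :: "'g vec \<Rightarrow> 'g vec \<Rightarrow> 'g vec" where
  "mobius a y = (let w = smul (1 / (1 - l2inner y a)) (vsub a y);
                     s = sqrt (1 - (l2norm a)\<^sup>2)
                 in vadd (smul (complex_of_real s) (vsub w (projP a w))) (projP a w))"

definition inv_norm :: "('g vec \<Rightarrow> complex) \<Rightarrow> ereal" where
  "inv_norm f = (SUP x\<in>BE. ereal (l2norm (grad (f \<circ> mobius x) zerovec)))"

definition bloch_norm :: "('g vec \<Rightarrow> complex) \<Rightarrow> ereal" where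
  "bloch_norm f = ereal (cmod (f zerovec)) + inv_norm f"

definition compact_comp_op :: "('g vec \<Rightarrow> 'g vec) \<Rightarrow> bool" where
  "compact_comp_op \<phi> \<longleftrightarrow> (\<forall>f\<in>bloch_space. f \<circ> \<phi> \<in> bloch_space) \<and>
    (\<forall>F :: nat \<Rightarrow> 'g vec \<Rightarrow> complex. (\<forall>n. F n \<in> bloch_space) \<longrightarrow>
        (\<exists>C. \<forall>n. bloch_norm (F n) \<le> ereal C) \<longrightarrow>
        (\<exists>r g. strict_mono r \<and> g \<in> bloch_space \<and>
           (\<lambda>n. bloch_norm (\<lambda>x. F (r n) (\<phi> x) - g x)) \<longlonglongrightarrow> 0))"

definition cbloch_semi :: "(complex \<Rightarrow> complex) \<Rightarrow> ereal" where
  "cbloch_semi F = (SUP z\<in>ball 0 1. ereal ((1 - (cmod z)\<^sup>2) * cmod (deriv F z)))"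

definition cbloch_space :: "(complex \<Rightarrow> complex) set" where
  "cbloch_space = {F. F holomorphic_on ball 0 1 \<and> cbloch_semi F < \<infinity>}"

definition cbloch_norm :: "(complex \<Rightarrow> complex) \<Rightarrow> ereal" where
  "cbloch_norm F = ereal (cmod (F 0)) + cbloch_semi F"

definition compact_ccomp_op :: "(complex \<Rightarrow> complex) \<Rightarrow> bool" where
  "compact_ccomp_op \<psi> \<longleftrightarrow> (\<forall>F\<in>cbloch_space. F \<circ> \<psi> \<in> cbloch_space) \<and>
    (\<forall>F :: nat \<Rightarrow> complex \<Rightarrow> complex. (\<forall>n. F n \<in> cbloch_space) \<longrightarrow>
        (\<exists>C. \<forall>n. cbloch_norm (F n) \<le> ereal C) \<longrightarrow>
        (\<exists>r G. strict_mono r \<and> G \<in> cbloch_space \<and>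
           (\<lambda>n. cbloch_norm (\<lambda>z. F (r n) (\<psi> z) - G z)) \<longlonglongrightarrow> 0))"

definition quot :: "('g vec \<Rightarrow> 'g vec) \<Rightarrow> 'g \<Rightarrow> 'g vec \<Rightarrow> real" where
  "quot \<phi> k z = (1 - (l2norm z)\<^sup>2) * cmod (radial (\<lambda>x. \<phi> x k) z)
                   / (1 - (cmod (\<phi> z k))\<^sup>2)"

end

theory Submission
  imports Defs
begin


lemma l2_summ: "is_l2 x \<Longrightarrow> (\<lambda>k. (cmod (x k))\<^sup>2) summable_on UNIV"
  by (simp add: is_l2_def)

lemma is_l2_zero[simp]: "is_l2 zerovec"
  by (simp add: is_l2_def zerovec_def)

lemma is_l2_smul[simp]: "is_l2 x \<Longrightarrow> is_l2 (smul c x)"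
proof -
  assume "is_l2 x"
  then have "(\<lambda>k. (cmod c)\<^sup>2 * (cmod (x k))\<^sup>2) summable_on UNIV"
    by (intro summable_on_cmult_right) (simp add: is_l2_def)
  then show ?thesis by (simp add: is_l2_def smul_def norm_mult power_mult_distrib)
qed

lemma sq2: "((a::real) + b)\<^sup>2 \<le> 2 * a\<^sup>2 + 2 * b\<^sup>2"
proof -
  have "(a+b)\<^sup>2 + (a-b)\<^sup>2 = 2 * a\<^sup>2 + 2 * b\<^sup>2" by (simp add: power2_eq_square algebra_simps)
  moreover have "(a-b)\<^sup>2 \<ge> 0" by simp
  ultimately show ?thesis by linarith
qed

lemma ab_le: "(a::real) * b \<le> (a\<^sup>2 + b\<^sup>2) / 2"
proof -
  have "(a-b)\<^sup>2 \<ge> 0" by simp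
  then show ?thesis by (simp add: power2_eq_square algebra_simps)
qed

lemma is_l2_add[simp]: "is_l2 x \<Longrightarrow> is_l2 y \<Longrightarrow> is_l2 (vadd x y)"
proof -
  assume a: "is_l2 x" "is_l2 y"
  have s: "(\<lambda>k. 2 * (cmod (x k))\<^sup>2 + 2 * (cmod (y k))\<^sup>2) summable_on UNIV"
    using a by (intro summable_on_add summable_on_cmult_right) (auto simp: is_l2_def)
  have le: "(cmod (x k + y k))\<^sup>2 \<le> 2 * (cmod (x k))\<^sup>2 + 2 * (cmod (y k))\<^sup>2" for k
  proof -
    have "cmod (x k + y k) \<le> cmod (x k) + cmod (y k)" by (rule norm_triangle_ineq)
    then have "(cmod (x k + y k))\<^sup>2 \<le> (cmod (x k) + cmod (y k))\<^sup>2"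
      using power_mono[OF _ norm_ge_zero, of _ _ 2] by blast
    also have "\<dots> \<le> 2 * (cmod (x k))\<^sup>2 + 2 * (cmod (y k))\<^sup>2"
      by (rule sq2)
    finally show ?thesis .
  qed
  show ?thesis unfolding is_l2_def vadd_def
    by (rule summable_on_comparison_test[OF s]) (use le in auto)
qed

lemma is_l2_uminus: "is_l2 x \<Longrightarrow> is_l2 (\<lambda>k. - x k)"
  using is_l2_smul[of x "-1"] by (simp add: smul_def)

lemma is_l2_sub[simp]: "is_l2 x \<Longrightarrow> is_l2 y \<Longrightarrow> is_l2 (vsub x y)"
proof -
  assume "is_l2 x" "is_l2 y"
  then have "is_l2 (vadd x (smul (-1) y))" by simp
  then show ?thesis by (simp add: vadd_def smul_def vsub_def)
qed

lemma is_l2_basis[simp]: "is_l2 (basis_vec l)"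
  unfolding is_l2_def basis_vec_def
  by (rule finite_nonzero_values_imp_summable_on) (rule finite_subset[of _ "{l}"], auto)

lemma inner_summable:
  assumes "is_l2 x" "is_l2 y"
  shows "(\<lambda>k. x k * cnj (y k)) summable_on UNIV"
proof -
  have s: "(\<lambda>k. ((cmod (x k))\<^sup>2 + (cmod (y k))\<^sup>2) / 2) summable_on UNIV"
  proof -
    have "(\<lambda>k. ((cmod (x k))\<^sup>2 + (cmod (y k))\<^sup>2) * (1/2)) summable_on UNIV"
      using assms by (intro summable_on_cmult_left summable_on_add) (auto simp: is_l2_def)
    then show ?thesis by simp
  qed
  have "(\<lambda>k. norm (x k * cnj (y k))) summable_on UNIV"
  proof (rule summable_on_comparison_test[OF s])
    fix k
    have "cmod (x k) * cmod (y k) \<le> ((cmod (x k))\<^sup>2 + (cmod (y k))\<^sup>2) / 2"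
      by (rule ab_le)
    then show "norm (x k * cnj (y k)) \<le> ((cmod (x k))\<^sup>2 + (cmod (y k))\<^sup>2) / 2"
      by (simp add: norm_mult)
  qed simp
  then show ?thesis using summable_on_iff_abs_summable_on_complex by blast
qed

lemma nsq_nonneg: "(\<Sum>\<^sub>\<infinity>k. (cmod (x k))\<^sup>2) \<ge> 0"
  by (rule infsum_nonneg) simp

lemma l2norm_nonneg[simp]: "l2norm x \<ge> 0"
  by (simp add: l2norm_def nsq_nonneg)

lemma l2norm_sq: "(l2norm x)\<^sup>2 = (\<Sum>\<^sub>\<infinity>k. (cmod (x k))\<^sup>2)"
  by (simp add: l2norm_def nsq_nonneg)

lemma l2inner_self: "is_l2 x \<Longrightarrow> l2inner x x = complex_of_real ((l2norm x)\<^sup>2)"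
proof -
  assume a: "is_l2 x"
  have "((\<lambda>k. complex_of_real ((cmod (x k))\<^sup>2)) has_sum complex_of_real (\<Sum>\<^sub>\<infinity>k. (cmod (x k))\<^sup>2)) UNIV"
    by (rule has_sum_of_real) (use a in \<open>simp add: is_l2_def\<close>)
  then have "l2inner x x = complex_of_real (\<Sum>\<^sub>\<infinity>k. (cmod (x k))\<^sup>2)"
    unfolding l2inner_def complex_norm_square by (rule infsumI)
  then show ?thesis by (simp add: l2norm_sq)
qed

lemma comp_le: "is_l2 x \<Longrightarrow> cmod (x k) \<le> l2norm x"
proof -
  assume a: "is_l2 x"
  have "sum (\<lambda>k. (cmod (x k))\<^sup>2) {k} \<le> (\<Sum>\<^sub>\<infinity>k. (cmod (x k))\<^sup>2)"
    by (rule finite_sum_le_infsum) (use a in \<open>auto simp: is_l2_def\<close>)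
  then have "(cmod (x k))\<^sup>2 \<le> (l2norm x)\<^sup>2" by (simp add: l2norm_sq)
  then show ?thesis using l2norm_nonneg power2_le_imp_le by blast
qed

lemma l2norm_eq0: "is_l2 x \<Longrightarrow> l2norm x = 0 \<Longrightarrow> x = zerovec"
proof
  fix k assume "is_l2 x" "l2norm x = 0"
  then have "cmod (x k) \<le> 0" using comp_le by metis
  then show "x k = zerovec k" by (simp add: zerovec_def)
qed

lemma l2norm_zero[simp]: "l2norm zerovec = 0"
  by (simp add: l2norm_def zerovec_def)

lemma l2inner_cnj: "l2inner y x = cnj (l2inner x y)"
  unfolding l2inner_def by (simp flip: infsum_cnj) (simp add: mult.commute)

lemma l2inner_add_left: "is_l2 x \<Longrightarrow> is_l2 y \<Longrightarrow> is_l2 z \<Longrightarrow>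
   l2inner (vadd x y) z = l2inner x z + l2inner y z"
  unfolding l2inner_def vadd_def
  by (simp add: distrib_right infsum_add inner_summable)

lemma l2inner_smul_left: "is_l2 x \<Longrightarrow> is_l2 y \<Longrightarrow> l2inner (smul c x) y = c * l2inner x y"
  unfolding l2inner_def smul_def
  by (simp add: mult.assoc infsum_cmult_right inner_summable)

lemma l2inner_add_right: "is_l2 x \<Longrightarrow> is_l2 y \<Longrightarrow> is_l2 z \<Longrightarrow>
   l2inner z (vadd x y) = l2inner z x + l2inner z y"
  by (subst (1 2 3) l2inner_cnj) (simp add: l2inner_add_left)

lemma l2inner_smul_right: "is_l2 x \<Longrightarrow> is_l2 y \<Longrightarrow> l2inner y (smul c x) = cnj c * l2inner y x"
  by (subst (1 2) l2inner_cnj) (simp add: l2inner_smul_left)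

lemma vsub_eq: "vsub x y = vadd x (smul (-1) y)"
  by (simp add: vsub_def vadd_def smul_def)

lemma l2inner_sub_left: "is_l2 x \<Longrightarrow> is_l2 y \<Longrightarrow> is_l2 z \<Longrightarrow>
   l2inner (vsub x y) z = l2inner x z - l2inner y z"
  by (simp add: vsub_eq l2inner_add_left l2inner_smul_left)

lemma l2inner_sub_right: "is_l2 x \<Longrightarrow> is_l2 y \<Longrightarrow> is_l2 z \<Longrightarrow>
   l2inner z (vsub x y) = l2inner z x - l2inner z y"
  by (simp add: vsub_eq l2inner_add_right l2inner_smul_right)

lemma l2inner_zero_left[simp]: "l2inner zerovec y = 0"
  by (simp add: l2inner_def zerovec_def)

lemma l2inner_zero_right[simp]: "l2inner y zerovec = 0"
  by (simp add: l2inner_def zerovec_def)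

lemma l2norm_smul: "is_l2 x \<Longrightarrow> l2norm (smul c x) = cmod c * l2norm x"
proof -
  assume a: "is_l2 x"
  have "(\<Sum>\<^sub>\<infinity>k. (cmod (smul c x k))\<^sup>2) = (\<Sum>\<^sub>\<infinity>k. (cmod c)\<^sup>2 * (cmod (x k))\<^sup>2)"
    by (simp add: smul_def norm_mult power_mult_distrib)
  also have "\<dots> = (cmod c)\<^sup>2 * (\<Sum>\<^sub>\<infinity>k. (cmod (x k))\<^sup>2)"
    by (rule infsum_cmult_right) (use a in \<open>simp add: is_l2_def\<close>)
  finally show ?thesis
    by (simp add: l2norm_def real_sqrt_mult)
qed

lemma l2norm_add_sq: "is_l2 x \<Longrightarrow> is_l2 y \<Longrightarrow>
   (l2norm (vadd x y))\<^sup>2 = (l2norm x)\<^sup>2 + 2 * Re (l2inner x y) + (l2norm y)\<^sup>2"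
proof -
  assume a: "is_l2 x" "is_l2 y"
  have "complex_of_real ((l2norm (vadd x y))\<^sup>2) = l2inner (vadd x y) (vadd x y)"
    using a by (simp add: l2inner_self)
  also have "\<dots> = l2inner x x + l2inner x y + (l2inner y x + l2inner y y)"
    using a by (simp add: l2inner_add_left l2inner_add_right)
  also have "\<dots> = complex_of_real ((l2norm x)\<^sup>2) + (l2inner x y + cnj (l2inner x y)) + complex_of_real ((l2norm y)\<^sup>2)"
    using a by (simp add: l2inner_self l2inner_cnj[of y x])
  also have "l2inner x y + cnj (l2inner x y) = complex_of_real (2 * Re (l2inner x y))"
    by (simp add: complex_add_cnj)
  finally have "complex_of_real ((l2norm (vadd x y))\<^sup>2) = complex_of_real ((l2norm x)\<^sup>2 + 2 * Re (l2inner x y) + (l2norm y)\<^sup>2)"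
    by simp
  then show ?thesis using of_real_eq_iff by blast
qed

lemma cauchy_schwarz: "is_l2 x \<Longrightarrow> is_l2 y \<Longrightarrow> cmod (l2inner x y) \<le> l2norm x * l2norm y"
proof -
  assume a: "is_l2 x" "is_l2 y"
  show ?thesis
  proof (cases "l2norm y = 0")
    case True
    then have "y = zerovec" using a l2norm_eq0 by blast
    then show ?thesis by simp
  next
    case False
    then have ny: "l2norm y > 0" using l2norm_nonneg[of y] by linarith
    define t where "t = l2inner x y / complex_of_real ((l2norm y)\<^sup>2)"
    have "0 \<le> (l2norm (vadd x (smul (-t) y)))\<^sup>2" by simp
    also have "\<dots> = (l2norm x)\<^sup>2 + 2 * Re (l2inner x (smul (-t) y)) + (cmod t)\<^sup>2 * (l2norm y)\<^sup>2"
      using a by (simp add: l2norm_add_sq l2norm_smul power_mult_distrib)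
    also have "l2inner x (smul (-t) y) = - cnj t * l2inner x y"
      using a by (simp add: l2inner_smul_right)
    also have "- cnj t * l2inner x y = - complex_of_real ((cmod (l2inner x y))\<^sup>2 / (l2norm y)\<^sup>2)"
      unfolding t_def using complex_norm_square[of "l2inner x y"] by (simp add: mult.commute del: of_real_power)
    also have "(cmod t)\<^sup>2 = (cmod (l2inner x y))\<^sup>2 / ((l2norm y)\<^sup>2)\<^sup>2"
      unfolding t_def by (simp add: norm_divide power_divide norm_power del: of_real_power)
    finally have "0 \<le> (l2norm x)\<^sup>2 - (cmod (l2inner x y))\<^sup>2 / (l2norm y)\<^sup>2"
      using ny by (simp add: power2_eq_square field_simps)
    then have "(cmod (l2inner x y))\<^sup>2 \<le> (l2norm x * l2norm y)\<^sup>2"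
      using ny by (simp add: field_simps power_mult_distrib)
    then show ?thesis by (rule power2_le_imp_le) simp
  qed
qed

lemma l2norm_triangle: "is_l2 x \<Longrightarrow> is_l2 y \<Longrightarrow> l2norm (vadd x y) \<le> l2norm x + l2norm y"
proof -
  assume a: "is_l2 x" "is_l2 y"
  have "Re (l2inner x y) \<le> l2norm x * l2norm y"
    using cauchy_schwarz[OF a] complex_Re_le_cmod order_trans by blast
  have "(l2norm (vadd x y))\<^sup>2 = (l2norm x)\<^sup>2 + 2 * Re (l2inner x y) + (l2norm y)\<^sup>2"
    by (rule l2norm_add_sq[OF a])
  also have "\<dots> \<le> (l2norm x)\<^sup>2 + 2 * (l2norm x * l2norm y) + (l2norm y)\<^sup>2"
    using \<open>Re (l2inner x y) \<le> l2norm x * l2norm y\<close> by linarith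
  also have "\<dots> = (l2norm x + l2norm y)\<^sup>2" by (simp add: power2_sum)
  finally have "(l2norm (vadd x y))\<^sup>2 \<le> (l2norm x + l2norm y)\<^sup>2" .
  then show ?thesis by (rule power2_le_imp_le) simp
qed

lemma single_sum: "(\<And>k. k \<noteq> l \<Longrightarrow> f k = 0) \<Longrightarrow> (\<Sum>\<^sub>\<infinity>k. f k) = (f l :: 'a::{topological_comm_monoid_add,t2_space})"
  by (rule infsumI, rule has_sum_finite_neutralI[of "{l}"]) auto

lemma inner_basis_right[simp]: "l2inner x (basis_vec l) = x l"
  unfolding l2inner_def basis_vec_def by (subst single_sum[of l]) auto

lemma inner_basis_left[simp]: "l2inner (basis_vec l) x = cnj (x l)"
  unfolding l2inner_def basis_vec_def by (subst single_sum[of l]) auto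

lemma norm_basis[simp]: "l2norm (basis_vec l) = 1"
  unfolding l2norm_def basis_vec_def by (subst single_sum[of l]) auto


definition fr :: "('g vec \<Rightarrow> complex) \<Rightarrow> 'g vec \<Rightarrow> 'g vec \<Rightarrow> bool" where
  "fr f a v \<longleftrightarrow> is_l2 v \<and> (\<forall>\<epsilon>>0. \<exists>\<delta>>0. \<forall>h. is_l2 h \<and> l2norm h < \<delta> \<longrightarrow>
          cmod (f (vadd a h) - f a - l2inner h v) \<le> \<epsilon> * l2norm h)"

lemma fr_unique:
  assumes fv: "fr f a v" and fw: "fr f a w"
  shows "v = w"
proof -
  have lv: "is_l2 v" and lw: "is_l2 w" using fv fw by (auto simp: fr_def)
  define u where "u = vsub v w"
  have lu: "is_l2 u" using lv lw by (simp add: u_def)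
  have "l2norm u = 0"
  proof (rule ccontr)
    assume "l2norm u \<noteq> 0"
    then have nu: "l2norm u > 0" using l2norm_nonneg[of u] by linarith
    define \<epsilon> where "\<epsilon> = l2norm u / 4"
    have ep: "\<epsilon> > 0" using nu by (simp add: \<epsilon>_def)
    obtain d1 where d1: "d1 > 0" "\<forall>h. is_l2 h \<and> l2norm h < d1 \<longrightarrow>
          cmod (f (vadd a h) - f a - l2inner h v) \<le> \<epsilon> * l2norm h"
      using fv ep unfolding fr_def by blast
    obtain d2 where d2: "d2 > 0" "\<forall>h. is_l2 h \<and> l2norm h < d2 \<longrightarrow>
          cmod (f (vadd a h) - f a - l2inner h w) \<le> \<epsilon> * l2norm h"
      using fw ep unfolding fr_def by blast
    define t :: real where "t = min d1 d2 / (2 * l2norm u)"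
    have tp: "t > 0" using d1 d2 nu by (simp add: t_def)
    define h where "h = smul (complex_of_real t) u"
    have lh: "is_l2 h" using lu by (simp add: h_def)
    have nh: "l2norm h = t * l2norm u" using lu tp by (simp add: h_def l2norm_smul)
    have nh2: "l2norm h = min d1 d2 / 2" using nu by (simp add: nh t_def)
    have hd1: "l2norm h < d1" and hd2: "l2norm h < d2" using nh2 d1 d2 by auto
    have "cmod (l2inner h u) = cmod (l2inner h v - l2inner h w)"
      using lv lw lh by (simp add: u_def l2inner_sub_right)
    also have "\<dots> \<le> cmod (f (vadd a h) - f a - l2inner h w) + cmod (f (vadd a h) - f a - l2inner h v)"
      by (rule order_trans[OF _ norm_triangle_ineq4]) (simp add: algebra_simps)
    also have "\<dots> \<le> 2 * \<epsilon> * l2norm h" using d1(2) d2(2) lh hd1 hd2 by fastforce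
    finally have A: "cmod (l2inner h u) \<le> 2 * \<epsilon> * l2norm h" .
    have "l2inner h u = complex_of_real t * complex_of_real ((l2norm u)\<^sup>2)"
      using lu by (simp add: h_def l2inner_smul_left l2inner_self)
    then have "cmod (l2inner h u) = t * (l2norm u)\<^sup>2" using tp
      by (simp add: norm_mult norm_power)
    with A have "t * (l2norm u)\<^sup>2 \<le> 2 * (l2norm u / 4) * (t * l2norm u)"
      by (simp add: nh \<epsilon>_def)
    then show False using tp nu by (simp add: power2_eq_square field_simps)
  qed
  then have "u = zerovec" using lu l2norm_eq0 by blast
  then show ?thesis
    by (intro ext) (metis (mono_tags) u_def vsub_def zerovec_def right_minus_eq)
qed

lemma grad_eq: "fr f a v \<Longrightarrow> grad f a = v"
  unfolding grad_def fr_def[symmetric]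
  by (rule the_equality) (auto intro: fr_unique)

definition restr :: "'g set \<Rightarrow> 'g vec \<Rightarrow> 'g vec" where
  "restr F h = (\<lambda>k. if k \<in> F then h k else 0)"

lemma infsum_fin: "finite F \<Longrightarrow> (\<And>k. k \<notin> F \<Longrightarrow> f k = 0) \<Longrightarrow>
   (\<Sum>\<^sub>\<infinity>k. f k) = (sum f F :: 'a::{topological_comm_monoid_add,t2_space})"
  by (rule infsumI, rule has_sum_finite_neutralI[of F]) auto

lemma is_l2_restr[simp]: "finite F \<Longrightarrow> is_l2 (restr F h)"
  unfolding is_l2_def restr_def
  by (rule finite_nonzero_values_imp_summable_on) (rule finite_subset[of _ F], auto)

lemma restr_norm_sq: "finite F \<Longrightarrow> (l2norm (restr F h))\<^sup>2 = (\<Sum>k\<in>F. (cmod (h k))\<^sup>2)"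
  unfolding l2norm_sq restr_def by (subst infsum_fin[of F]) auto

lemma restr_inner: "finite F \<Longrightarrow> l2inner (restr F h) v = (\<Sum>k\<in>F. h k * cnj (v k))"
  unfolding l2inner_def restr_def by (subst infsum_fin[of F]) auto

lemma tail_small:
  assumes "is_l2 h" "\<epsilon> > 0"
  shows "\<exists>F. finite F \<and> l2norm (vsub h (restr F h)) \<le> \<epsilon>"
proof -
  let ?f = "\<lambda>k. (cmod (h k))\<^sup>2"
  have s: "?f summable_on UNIV" using assms by (simp add: is_l2_def)
  obtain F where F: "finite F" "dist (sum ?f F) (infsum ?f UNIV) \<le> \<epsilon>\<^sup>2"
    using infsum_finite_approximation[OF s, of "\<epsilon>\<^sup>2"] assms by auto
  have s1: "(\<lambda>k. if k \<in> F then ?f k else 0) summable_on UNIV"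
    by (rule finite_nonzero_values_imp_summable_on) (rule finite_subset[of _ F], use F in auto)
  have s2: "(\<lambda>k. if k \<in> F then 0 else ?f k) summable_on UNIV"
    by (rule summable_on_comparison_test[OF s]) auto
  have "infsum ?f UNIV = infsum (\<lambda>k. (if k \<in> F then ?f k else 0) + (if k \<in> F then 0 else ?f k)) UNIV"
    by (intro infsum_cong) auto
  also have "\<dots> = sum ?f F + infsum (\<lambda>k. if k \<in> F then 0 else ?f k) UNIV"
    using s1 s2 F by (simp add: infsum_add infsum_fin[of F])
  finally have e: "infsum (\<lambda>k. if k \<in> F then 0 else ?f k) UNIV = infsum ?f UNIV - sum ?f F" by simp
  have "(l2norm (vsub h (restr F h)))\<^sup>2 = infsum (\<lambda>k. if k \<in> F then 0 else ?f k) UNIV"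
    unfolding l2norm_sq by (intro infsum_cong) (auto simp: vsub_def restr_def)
  also have "\<dots> \<le> \<epsilon>\<^sup>2" using e F(2) by (simp add: dist_real_def)
  finally show ?thesis using F(1) assms(2) by (meson less_imp_le power2_le_imp_le)
qed

lemma riesz:
  fixes L :: "'g vec \<Rightarrow> complex"
  assumes ladd: "\<And>x y. is_l2 x \<Longrightarrow> is_l2 y \<Longrightarrow> L (vadd x y) = L x + L y"
    and lsm: "\<And>c x. is_l2 x \<Longrightarrow> L (smul c x) = c * L x"
    and bnd: "\<And>x. is_l2 x \<Longrightarrow> cmod (L x) \<le> C * l2norm x"
  shows "\<exists>v. is_l2 v \<and> (\<forall>h. is_l2 h \<longrightarrow> L h = l2inner h v)"
proof -
  define v where "v = (\<lambda>k. cnj (L (basis_vec k)))"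
  have L0: "L zerovec = 0" using lsm[OF is_l2_zero, of 0] by (simp add: smul_def zerovec_def)
  have Lfin: "L (restr F h) = (\<Sum>k\<in>F. h k * L (basis_vec k))" if "finite F" for F h
    using that
  proof (induction F rule: finite_induct)
    case empty
    have "restr {} h = zerovec" by (simp add: restr_def zerovec_def)
    then show ?case by (simp add: L0)
  next
    case (insert j F)
    have "restr (insert j F) h = vadd (smul (h j) (basis_vec j)) (restr F h)"
      using insert by (auto simp: restr_def vadd_def smul_def basis_vec_def)
    then show ?case using insert by (simp add: ladd lsm)
  qed
  have bd: "(\<Sum>k\<in>F. (cmod (v k))\<^sup>2) \<le> C\<^sup>2" if "finite F" for F
  proof -
    let ?S = "\<Sum>k\<in>F. (cmod (v k))\<^sup>2"
    have "L (restr F v) = (\<Sum>k\<in>F. v k * L (basis_vec k))" using Lfin that by blast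
    also have "\<dots> = (\<Sum>k\<in>F. complex_of_real ((cmod (v k))\<^sup>2))"
      by (intro sum.cong) (auto simp: v_def complex_norm_square mult.commute simp del: of_real_power)
    also have "\<dots> = complex_of_real ?S" by (simp only: of_real_sum)
    finally have e: "L (restr F v) = complex_of_real ?S" .
    have "cmod (L (restr F v)) = ?S"
      unfolding e norm_of_real by (rule abs_of_nonneg) (simp add: sum_nonneg)
    have nr: "l2norm (restr F v) = sqrt ?S"
      using restr_norm_sq[OF that, of v] l2norm_nonneg real_sqrt_unique by metis
    have "?S \<le> C * sqrt ?S"
      using bnd[OF is_l2_restr[OF that], of v] \<open>cmod (L (restr F v)) = ?S\<close> nr by simp
    moreover have "?S \<ge> 0" by (simp add: sum_nonneg)
    ultimately show ?thesis
    proof (cases "?S = 0")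
      case False
      with \<open>?S \<ge> 0\<close> have sp: "sqrt ?S > 0" by simp
      have "sqrt ?S * sqrt ?S \<le> C * sqrt ?S"
        using \<open>?S \<le> C * sqrt ?S\<close> \<open>?S \<ge> 0\<close> by simp
      then have "sqrt ?S \<le> C" using mult_right_le_imp_le[OF _ sp] by blast
      then have "(sqrt ?S)\<^sup>2 \<le> C\<^sup>2" using sp power_mono[of "sqrt ?S" C 2] by linarith
      then show ?thesis using \<open>?S \<ge> 0\<close> by simp
    qed simp
  qed
  have lv: "is_l2 v" unfolding is_l2_def
    by (rule nonneg_bdd_above_summable_on) (auto intro!: bdd_aboveI[of _ "C\<^sup>2"] bd)
  have rep: "L h = l2inner h v" if lh: "is_l2 h" for h
  proof -
    have "cmod (L h - l2inner h v) \<le> (\<bar>C\<bar> + l2norm v) * \<epsilon>" if ep: "\<epsilon> > 0" for \<epsilon>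
    proof -
      obtain F where F: "finite F" "l2norm (vsub h (restr F h)) \<le> \<epsilon>"
        using tail_small[OF lh ep] by blast
      let ?r = "restr F h" and ?d = "vsub h (restr F h)"
      have ld: "is_l2 ?d" using lh F by simp
      have hv: "h = vadd ?d ?r" by (auto simp: vadd_def vsub_def)
      have "L h = L ?d + L ?r" by (subst hv) (simp add: ladd ld F)
      moreover have "l2inner h v = l2inner ?d v + l2inner ?r v"
        by (subst hv) (simp add: l2inner_add_left ld F lv)
      moreover have "L ?r = l2inner ?r v"
        using F by (simp only: Lfin restr_inner v_def) (intro sum.cong, auto simp: restr_def)
      ultimately have "L h - l2inner h v = L ?d - l2inner ?d v" by simp
      then have "cmod (L h - l2inner h v) \<le> cmod (L ?d) + cmod (l2inner ?d v)"
        by (simp add: norm_triangle_ineq4)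
      also have "\<dots> \<le> \<bar>C\<bar> * l2norm ?d + l2norm ?d * l2norm v"
      proof (rule add_mono)
        show "cmod (L ?d) \<le> \<bar>C\<bar> * l2norm ?d"
          using bnd[OF ld] mult_right_mono[OF abs_ge_self[of C] l2norm_nonneg[of ?d]] by linarith
        show "cmod (l2inner ?d v) \<le> l2norm ?d * l2norm v" by (rule cauchy_schwarz[OF ld lv])
      qed
      also have "\<dots> = (\<bar>C\<bar> + l2norm v) * l2norm ?d" by (simp add: algebra_simps)
      also have "\<dots> \<le> (\<bar>C\<bar> + l2norm v) * \<epsilon>"
        using F(2) by (intro mult_left_mono) auto
      finally show ?thesis .
    qed
    then have "cmod (L h - l2inner h v) = 0"
    proof -
      assume H: "\<And>\<epsilon>. \<epsilon> > 0 \<Longrightarrow> cmod (L h - l2inner h v) \<le> (\<bar>C\<bar> + l2norm v) * \<epsilon>"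
      show ?thesis
      proof (rule ccontr)
        assume ne: "cmod (L h - l2inner h v) \<noteq> 0"
        let ?m = "cmod (L h - l2inner h v)" and ?K = "\<bar>C\<bar> + l2norm v + 1"
        have "?m > 0" using ne by simp
        have K: "?K > 0" by (simp add: add_nonneg_pos)
        have "?m \<le> (\<bar>C\<bar> + l2norm v) * (?m / ?K)"
          using H[of "?m / ?K"] \<open>?m > 0\<close> K by simp
        also have "\<dots> < ?K * (?m / ?K)"
          using \<open>?m > 0\<close> K by (intro mult_strict_right_mono) auto
        also have "\<dots> = ?m" using K by simp
        finally show False by simp
      qed
    qed
    then show ?thesis by simp
  qed
  show ?thesis using lv rep by blast
qed

lemma hol_grad:
  assumes "hol_fun f" "a \<in> BE"
  shows "fr f a (grad f a)"
proof -
  obtain L where L: "\<forall>x y. is_l2 x \<longrightarrow> is_l2 y \<longrightarrow> L (vadd x y) = L x + L y"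
      "\<forall>c x. is_l2 x \<longrightarrow> L (smul c x) = c * L x"
      "\<exists>C. \<forall>x. is_l2 x \<longrightarrow> cmod (L x) \<le> C * l2norm x"
      "\<forall>\<epsilon>>0. \<exists>\<delta>>0. \<forall>h. is_l2 h \<and> l2norm h < \<delta> \<longrightarrow>
          cmod (f (vadd a h) - f a - L h) \<le> \<epsilon> * l2norm h"
    using assms unfolding hol_fun_def by blast
  obtain C where C: "\<forall>x. is_l2 x \<longrightarrow> cmod (L x) \<le> C * l2norm x" using L(3) by blast
  obtain v where v: "is_l2 v" "\<forall>h. is_l2 h \<longrightarrow> L h = l2inner h v"
    using riesz[of L C] L(1,2) C by blast
  have "fr f a v" unfolding fr_def using v L(4) by metis
  then show ?thesis using grad_eq by metis
qed


lemma mob_alg0: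
  fixes X Y c S N d iN :: complex
  assumes "S^2 = 1 - N" "d * (1 - c) = 1" "N * iN = 1"
  shows "S * (d*(X - Y) - (d*(N - c)*iN)*X) + (d*(N - c)*iN)*X
       = X + d * (-S*Y + (S - S^2) * (c * iN) * X)"
  using assms by algebra

definition sx :: "'g vec \<Rightarrow> real" where
  "sx x = sqrt (1 - (l2norm x)\<^sup>2)"

definition Dvec :: "'g vec \<Rightarrow> 'g vec \<Rightarrow> 'g vec" where
  "Dvec x v = vadd (smul (- complex_of_real (sx x)) v)
      (smul (complex_of_real (sx x - (sx x)\<^sup>2) * l2inner v x / complex_of_real ((l2norm x)\<^sup>2)) x)"

lemma BE_D: "x \<in> BE \<Longrightarrow> is_l2 x \<and> l2norm x < 1"
  by (simp add: BE_def)

lemma norm_sq_lt1: "x \<in> BE \<Longrightarrow> (l2norm x)\<^sup>2 < 1"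
proof -
  assume "x \<in> BE"
  then have "l2norm x < 1" by (simp add: BE_def)
  then show ?thesis using power_strict_mono[of "l2norm x" 1 2] l2norm_nonneg[of x] by simp
qed

lemma sx_sq: "x \<in> BE \<Longrightarrow> (sx x)\<^sup>2 = 1 - (l2norm x)\<^sup>2"
  using norm_sq_lt1[of x] by (simp add: sx_def)

lemma sx_pos: "x \<in> BE \<Longrightarrow> 0 < sx x"
  using norm_sq_lt1[of x] by (simp add: sx_def)

lemma sx_le1: "sx x \<le> 1"
  by (simp add: sx_def)

lemma is_l2_Dvec[simp]: "is_l2 x \<Longrightarrow> is_l2 v \<Longrightarrow> is_l2 (Dvec x v)"
  by (simp add: Dvec_def)

lemma smul_zerovec[simp]: "smul c zerovec = zerovec"
  by (simp add: smul_def zerovec_def)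

lemma projP_eq: "projP a w = smul (l2inner w a / complex_of_real ((l2norm a)\<^sup>2)) a"
  by (simp add: projP_def)

lemma mob_formula:
  assumes x: "x \<in> BE" and y: "is_l2 y" and c1: "l2inner y x \<noteq> 1"
  shows "mobius x y = vadd x (smul (1 / (1 - l2inner y x)) (Dvec x y))"
proof -
  have lx: "is_l2 x" using x BE_D by blast
  define c where "c = l2inner y x"
  define n where "n = complex_of_real ((l2norm x)\<^sup>2)"
  define S where "S = complex_of_real (sx x)"
  define w where "w = smul (1 / (1 - c)) (vsub x y)"
  have lw: "l2inner w x = (1 / (1 - c)) * (n - c)"
    unfolding w_def n_def c_def using lx y by (simp add: l2inner_smul_left l2inner_sub_left l2inner_self)
  have S2: "S^2 = 1 - n" using sx_sq[OF x] by (simp add: S_def n_def flip: of_real_power)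
  show ?thesis
  proof (cases "l2norm x = 0")
    case True
    then have x0: "x = zerovec" using lx l2norm_eq0 by blast
    then have "sx x = 1" by (simp add: sx_def)
    then show ?thesis using x0
      by (auto simp: mobius_def Let_def projP_def Dvec_def vadd_def smul_def vsub_def zerovec_def
          l2norm_zero[unfolded zerovec_def] sx_def)
  next
    case False
    then have n0: "n \<noteq> 0" by (simp add: n_def)
    have d: "(1 / (1 - c)) * (1 - c) = 1" using c1 by (simp add: c_def)
    have iN: "n * (1 / n) = 1" using n0 by simp
    show ?thesis
    proof
      fix k
      have "mobius x y k = S * ((1 / (1 - c)) * (x k - y k) - ((1 / (1 - c)) * (n - c) * (1/n)) * x k)
            + ((1 / (1 - c)) * (n - c) * (1/n)) * x k"
        unfolding mobius_def Let_def projP_eq c_def[symmetric] w_def[symmetric] lw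
        by (simp add: vadd_def smul_def vsub_def S_def n_def w_def sx_def)
      also have "\<dots> = x k + (1 / (1 - c)) * (-S * y k + (S - S^2) * (c * (1/n)) * x k)"
        by (rule mob_alg0[OF S2 d iN])
      also have "\<dots> = vadd x (smul (1 / (1 - l2inner y x)) (Dvec x y)) k"
        by (simp add: vadd_def smul_def Dvec_def c_def S_def n_def)
      finally show "mobius x y k = vadd x (smul (1 / (1 - l2inner y x)) (Dvec x y)) k" .
    qed
  qed
qed

lemma Dvec_smul: "is_l2 x \<Longrightarrow> is_l2 v \<Longrightarrow> Dvec x (smul c v) = smul c (Dvec x v)"
proof -
  assume a: "is_l2 x" "is_l2 v"
  have "l2inner (smul c v) x = c * l2inner v x" using a by (simp add: l2inner_smul_left)
  then show ?thesis unfolding Dvec_def by (simp add: vadd_def smul_def algebra_simps)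
qed

lemma cnj_sq: "z * cnj z = (complex_of_real (cmod z))\<^sup>2"
  by (metis complex_norm_square of_real_power)

lemma sx_zero[simp]: "sx zerovec = 1"
  by (simp add: sx_def)

lemma Dvec_adj:
  assumes "is_l2 x" "is_l2 y" "is_l2 v"
  shows "l2inner (Dvec x y) v = l2inner y (Dvec x v)"
proof -
  have "l2inner (Dvec x y) v = - complex_of_real (sx x) * l2inner y v
     + complex_of_real (sx x - (sx x)\<^sup>2) * l2inner y x / complex_of_real ((l2norm x)\<^sup>2) * l2inner x v"
    using assms by (simp add: Dvec_def l2inner_add_left l2inner_smul_left)
  also have "\<dots> = l2inner y (Dvec x v)"
    using assms by (simp add: Dvec_def l2inner_add_right l2inner_smul_right l2inner_cnj[of v x])
  finally show ?thesis .
qed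

lemma real_alg1:
  fixes s V C N :: real
  assumes "s\<^sup>2 = 1 - N" "N \<noteq> 0"
  shows "s\<^sup>2 * V + 2 * (- (s * ((s - s\<^sup>2) / N) * C)) + ((s - s\<^sup>2) / N)\<^sup>2 * C * N = s\<^sup>2 * (V - C)"
proof -
  have "s\<^sup>2 * V * N + 2 * (- (s * (s - s\<^sup>2) * C)) + (s - s\<^sup>2)\<^sup>2 * C = s\<^sup>2 * (V - C) * N"
    using assms(1) by algebra
  then show ?thesis using assms(2) apply (simp add: field_simps power2_eq_square)
    using assms(1) by algebra
qed

lemma Dvec_norm_sq:
  assumes x: "x \<in> BE" and v: "is_l2 v"
  shows "(l2norm (Dvec x v))\<^sup>2 = (sx x)\<^sup>2 * ((l2norm v)\<^sup>2 - (cmod (l2inner v x))\<^sup>2)"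
proof -
  have lx: "is_l2 x" using x BE_D by blast
  define s where "s = sx x"
  define N where "N = (l2norm x)\<^sup>2"
  define c where "c = l2inner v x"
  define r where "r = (s - s\<^sup>2) / N"
  have s2: "s\<^sup>2 = 1 - N" using sx_sq[OF x] by (simp add: s_def N_def)
  show ?thesis
  proof (cases "N = 0")
    case True
    then have x0: "x = zerovec" using lx l2norm_eq0 by (simp add: N_def)
    then have "s = 1" by (simp add: s_def sx_def)
    have "Dvec x v = smul (-1) v" using x0 \<open>s = 1\<close>
      by (simp add: Dvec_def s_def vadd_def smul_def zerovec_def)
    then show ?thesis using v x0 by (simp add: l2norm_smul)
  next
    case False
    let ?a = "smul (- complex_of_real s) v" and ?b = "smul (complex_of_real r * c) x"
    have D: "Dvec x v = vadd ?a ?b"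
      by (simp add: Dvec_def s_def r_def c_def N_def)
    have "(l2norm (Dvec x v))\<^sup>2 = (l2norm ?a)\<^sup>2 + 2 * Re (l2inner ?a ?b) + (l2norm ?b)\<^sup>2"
      unfolding D using v lx by (simp add: l2norm_add_sq)
    also have "(l2norm ?a)\<^sup>2 = s\<^sup>2 * (l2norm v)\<^sup>2"
      using v by (simp add: l2norm_smul power_mult_distrib s_def abs_of_nonneg sx_def)
    also have "l2inner ?a ?b = - complex_of_real (s * r * (cmod c)\<^sup>2)"
      using v lx by (simp add: l2inner_smul_left l2inner_smul_right c_def cnj_sq mult.commute)
    also have "(l2norm ?b)\<^sup>2 = r\<^sup>2 * (cmod c)\<^sup>2 * N"
      using lx by (simp add: l2norm_smul power_mult_distrib N_def norm_mult)
    finally have "(l2norm (Dvec x v))\<^sup>2 = s\<^sup>2 * (l2norm v)\<^sup>2 + 2 * (- (s * r * (cmod c)\<^sup>2)) + r\<^sup>2 * (cmod c)\<^sup>2 * N"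
      by simp
    also have "\<dots> = s\<^sup>2 * ((l2norm v)\<^sup>2 - (cmod c)\<^sup>2)"
      using real_alg1[OF s2 False, of "(l2norm v)\<^sup>2" "(cmod c)\<^sup>2"] by (simp add: r_def mult.assoc)
    finally show ?thesis by (simp add: s_def c_def)
  qed
qed

lemma Dvec_lower:
  assumes x: "x \<in> BE" and v: "is_l2 v"
  shows "(1 - (l2norm x)\<^sup>2) * l2norm v \<le> l2norm (Dvec x v)"
proof -
  have lx: "is_l2 x" using x BE_D by blast
  have cs: "(cmod (l2inner v x))\<^sup>2 \<le> (l2norm v)\<^sup>2 * (l2norm x)\<^sup>2"
    using power_mono[OF cauchy_schwarz[OF v lx] norm_ge_zero, of 2] by (simp add: power_mult_distrib)
  have s2: "(sx x)\<^sup>2 = 1 - (l2norm x)\<^sup>2" using sx_sq[OF x] .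
  have "((1 - (l2norm x)\<^sup>2) * l2norm v)\<^sup>2 = (1 - (l2norm x)\<^sup>2) * ((l2norm v)\<^sup>2 - (l2norm v)\<^sup>2 * (l2norm x)\<^sup>2)"
    by (simp add: power2_eq_square algebra_simps)
  also have "\<dots> = (sx x)\<^sup>2 * ((l2norm v)\<^sup>2 - (l2norm v)\<^sup>2 * (l2norm x)\<^sup>2)"
    by (simp only: s2)
  also have "\<dots> \<le> (sx x)\<^sup>2 * ((l2norm v)\<^sup>2 - (cmod (l2inner v x))\<^sup>2)"
    using cs by (intro mult_left_mono) auto
  also have "\<dots> = (l2norm (Dvec x v))\<^sup>2" using Dvec_norm_sq[OF x v] by simp
  finally show ?thesis by (rule power2_le_imp_le) simp
qed

lemma Dvec_upper:
  assumes x: "x \<in> BE" and v: "is_l2 v"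
  shows "l2norm (Dvec x v) \<le> l2norm v"
proof -
  have "(l2norm (Dvec x v))\<^sup>2 = (sx x)\<^sup>2 * ((l2norm v)\<^sup>2 - (cmod (l2inner v x))\<^sup>2)"
    using Dvec_norm_sq[OF x v] .
  also have "\<dots> \<le> (l2norm v)\<^sup>2"
  proof -
    let ?A = "(l2norm v)\<^sup>2 - (cmod (l2inner v x))\<^sup>2"
    have s1: "(sx x)\<^sup>2 \<le> 1" "0 \<le> (sx x)\<^sup>2" using sx_sq[OF x] zero_le_power2[of "l2norm x"] zero_le_power2[of "sx x"] by linarith+
    show ?thesis
    proof (cases "?A \<ge> 0")
      case True
      then have "(sx x)\<^sup>2 * ?A \<le> ?A" using s1 mult_left_le_one_le by blast
      then show ?thesis using zero_le_power2[of "cmod (l2inner v x)"] by linarith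
    next
      case False
      then have "(sx x)\<^sup>2 * ?A \<le> 0" using s1 mult_nonneg_nonpos by (metis linear)
      then show ?thesis using zero_le_power2[of "l2norm v"] by linarith
    qed
  qed
  finally show ?thesis by (rule power2_le_imp_le) auto
qed

lemma Dvec_basis:
  assumes x: "x \<in> BE"
  shows "l2norm (Dvec x (basis_vec k)) \<le> 1 - (cmod (x k))\<^sup>2"
proof -
  have lx: "is_l2 x" using x BE_D by blast
  have xk: "cmod (x k) \<le> l2norm x" using comp_le[OF lx] .
  have xk2: "(cmod (x k))\<^sup>2 \<le> (l2norm x)\<^sup>2" using power_mono[OF xk norm_ge_zero, of 2] .
  have n1: "(l2norm x)\<^sup>2 < 1" using norm_sq_lt1[OF x] .
  have A: "1 - (l2norm x)\<^sup>2 \<le> 1 - (cmod (x k))\<^sup>2" using xk2 by linarith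
  have B: "0 \<le> 1 - (cmod (x k))\<^sup>2" using xk2 n1 by linarith
  have e: "(l2norm (Dvec x (basis_vec k)))\<^sup>2 = (1 - (l2norm x)\<^sup>2) * (1 - (cmod (x k))\<^sup>2)"
    using Dvec_norm_sq[OF x is_l2_basis, of k]
    by (simp only: sx_sq[OF x] norm_basis inner_basis_left complex_mod_cnj power_one)
  have "(l2norm (Dvec x (basis_vec k)))\<^sup>2 \<le> (1 - (cmod (x k))\<^sup>2) * (1 - (cmod (x k))\<^sup>2)"
    unfolding e by (rule mult_right_mono[OF A B])
  then have "(l2norm (Dvec x (basis_vec k)))\<^sup>2 \<le> (1 - (cmod (x k))\<^sup>2)\<^sup>2"
    by (simp only: power2_eq_square)
  then show ?thesis using B by (rule power2_le_imp_le)
qed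

lemma Dvec_zero[simp]: "is_l2 x \<Longrightarrow> Dvec x zerovec = zerovec"
  unfolding Dvec_def by (simp add: l2inner_zero_left) (simp add: vadd_def smul_def zerovec_def)

lemma vadd_zero_right[simp]: "vadd x zerovec = x"
  by (simp add: vadd_def zerovec_def)

lemma vadd_zero_left[simp]: "vadd zerovec x = x"
  by (simp add: vadd_def zerovec_def)

lemma mob_zero: "x \<in> BE \<Longrightarrow> mobius x zerovec = x"
  using mob_formula[of x zerovec] BE_D[of x] by simp

lemma fr_mob:
  fixes x :: "'g vec"
  assumes x: "x \<in> BE" and fv: "fr h x v"
  shows "fr (h \<circ> mobius x) zerovec (Dvec x v)"
proof -
  have lx: "is_l2 x" and nx: "l2norm x < 1" using x BE_D by auto
  have lv: "is_l2 v" using fv by (simp add: fr_def)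
  define u where "u = Dvec x v"
  have lu: "is_l2 u" using lx lv by (simp add: u_def)
  show ?thesis unfolding fr_def u_def[symmetric]
  proof (intro conjI allI impI lu)
    fix \<epsilon> :: real assume ep: "\<epsilon> > 0"
    obtain d' where d': "d' > 0" "\<forall>h'. is_l2 h' \<and> l2norm h' < d' \<longrightarrow>
          cmod (h (vadd x h') - h x - l2inner h' v) \<le> (\<epsilon>/4) * l2norm h'"
      using fv ep unfolding fr_def by (meson divide_pos_pos zero_less_numeral)
    define \<delta> where "\<delta> = min (1/2) (min (d'/2) (\<epsilon> / (4 * (l2norm u + 1))))"
    have "l2norm u + 1 > 0" using l2norm_nonneg[of u] by linarith
    then have "4 * (l2norm u + 1) > 0" by simp
    then have dp: "\<delta> > 0" using d' ep by (simp add: \<delta>_def)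
    show "\<exists>\<delta>>0. \<forall>y. is_l2 y \<and> l2norm y < \<delta> \<longrightarrow>
          cmod ((h \<circ> mobius x) (vadd zerovec y) - (h \<circ> mobius x) zerovec - l2inner y u) \<le> \<epsilon> * l2norm y"
    proof (intro exI[of _ \<delta>] conjI dp allI impI)
      fix y :: "'g vec" assume yy: "is_l2 y \<and> l2norm y < \<delta>"
      then have ly: "is_l2 y" and ny: "l2norm y < \<delta>" by auto
      define c where "c = l2inner y x"
      have cbb: "cmod c \<le> l2norm y * l2norm x" using cauchy_schwarz[OF ly lx] by (simp add: c_def)
      have "l2norm y * l2norm x \<le> l2norm y" using nx by (intro mult_left_le) auto
      then have cb: "cmod c \<le> l2norm y" using cbb by linarith
      have ch: "cmod c < 1/2" using cb ny by (simp add: \<delta>_def)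
      have c1: "c \<noteq> 1" using ch by auto
      have omc: "cmod (1 - c) \<ge> 1/2"
        using norm_triangle_ineq2[of 1 c] ch by simp
      have omc0: "1 - c \<noteq> 0" using c1 by simp
      define d where "d = smul (1 / (1 - c)) (Dvec x y)"
      have ld: "is_l2 d" using lx ly by (simp add: d_def)
      have nd: "l2norm d \<le> 2 * l2norm y"
      proof -
        have "l2norm d = l2norm (Dvec x y) / cmod (1 - c)"
          using lx ly by (simp add: d_def l2norm_smul norm_divide)
        also have "\<dots> \<le> l2norm y / (1/2)"
          using Dvec_upper[OF x ly] omc by (intro frac_le) auto
        finally show ?thesis by simp
      qed
      have nd': "l2norm d < d'" using nd ny by (simp add: \<delta>_def)
      have mob: "mobius x y = vadd x d"
        using mob_formula[OF x ly] c1 by (simp add: d_def c_def)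
      have e1: "cmod (h (vadd x d) - h x - l2inner d v) \<le> (\<epsilon>/4) * l2norm d"
        using d'(2) ld nd' by blast
      have idv: "l2inner d v = (1 / (1 - c)) * l2inner y u"
        using lx ly lv by (simp add: d_def l2inner_smul_left Dvec_adj u_def)
      have "l2inner d v - l2inner y u = (c / (1 - c)) * l2inner y u"
        unfolding idv using omc0 by (simp add: field_simps)
      then have "cmod (l2inner d v - l2inner y u) = cmod c / cmod (1 - c) * cmod (l2inner y u)"
        by (simp add: norm_mult norm_divide)
      also have "\<dots> \<le> (l2norm y) / (1/2) * (l2norm y * l2norm u)"
      proof (intro mult_mono frac_le)
        show "cmod (l2inner y u) \<le> l2norm y * l2norm u" by (rule cauchy_schwarz[OF ly lu])
      qed (use cb omc in auto)
      also have "\<dots> = 2 * l2norm u * l2norm y * l2norm y" by simp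
      also have "\<dots> \<le> 2 * l2norm u * (\<epsilon> / (4 * (l2norm u + 1))) * l2norm y"
        using ny by (intro mult_right_mono mult_left_mono) (auto simp: \<delta>_def)
      also have "\<dots> \<le> (\<epsilon>/2) * l2norm y"
      proof (intro mult_right_mono)
        have "2 * l2norm u * (\<epsilon> / (4 * (l2norm u + 1))) = (\<epsilon>/2) * (l2norm u / (l2norm u + 1))"
          using \<open>l2norm u + 1 > 0\<close> by (simp add: field_simps)
        also have "\<dots> \<le> (\<epsilon>/2) * 1"
          using ep \<open>l2norm u + 1 > 0\<close> by (intro mult_left_mono) auto
        finally show "2 * l2norm u * (\<epsilon> / (4 * (l2norm u + 1))) \<le> \<epsilon> / 2" by simp
      qed simp
      finally have e2: "cmod (l2inner d v - l2inner y u) \<le> (\<epsilon>/2) * l2norm y" .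
      have "(h \<circ> mobius x) (vadd zerovec y) - (h \<circ> mobius x) zerovec - l2inner y u
            = (h (vadd x d) - h x - l2inner d v) + (l2inner d v - l2inner y u)"
        using mob mob_zero[OF x] by simp
      note eqq = this
      have "cmod ((h \<circ> mobius x) (vadd zerovec y) - (h \<circ> mobius x) zerovec - l2inner y u)
            \<le> cmod (h (vadd x d) - h x - l2inner d v) + cmod (l2inner d v - l2inner y u)"
        unfolding eqq by (rule norm_triangle_ineq)
      also have "\<dots> \<le> (\<epsilon>/4) * (2 * l2norm y) + (\<epsilon>/2) * l2norm y"
      proof -
        have "(\<epsilon>/4) * l2norm d \<le> (\<epsilon>/4) * (2 * l2norm y)" using nd ep by (intro mult_left_mono) auto
        then show ?thesis using e1 e2 by linarith
      qed
      also have "\<dots> = \<epsilon> * l2norm y" by simp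
      finally show "cmod ((h \<circ> mobius x) (vadd zerovec y) - (h \<circ> mobius x) zerovec - l2inner y u) \<le> \<epsilon> * l2norm y" .
    qed
  qed
qed

lemma grad_mob: "hol_fun h \<Longrightarrow> x \<in> BE \<Longrightarrow> grad (h \<circ> mobius x) zerovec = Dvec x (grad h x)"
  by (rule grad_eq, rule fr_mob) (auto intro: hol_grad)

lemma inv_lower:
  assumes h: "hol_fun h" and x: "x \<in> BE"
  shows "ereal ((1 - (l2norm x)\<^sup>2) * l2norm (grad h x)) \<le> inv_norm h"
proof -
  have lg: "is_l2 (grad h x)" using hol_grad[OF h x] by (simp add: fr_def)
  have "(1 - (l2norm x)\<^sup>2) * l2norm (grad h x) \<le> l2norm (grad (h \<circ> mobius x) zerovec)"
    using Dvec_lower[OF x lg] grad_mob[OF h x] by simp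
  also have "ereal (l2norm (grad (h \<circ> mobius x) zerovec)) \<le> inv_norm h"
    unfolding inv_norm_def using x by (rule SUP_upper2) simp
  finally show ?thesis by simp
qed


lemma BE_open:
  assumes a: "a \<in> BE" and h: "is_l2 h" "l2norm h < 1 - l2norm a"
  shows "vadd a h \<in> BE"
proof -
  have la: "is_l2 a" using a BE_D by blast
  have "l2norm (vadd a h) \<le> l2norm a + l2norm h" by (rule l2norm_triangle[OF la h(1)])
  then show ?thesis using h la by (simp add: BE_def)
qed

lemma fr_hol:
  fixes f :: "'g vec \<Rightarrow> complex"
  assumes "\<And>a. a \<in> BE \<Longrightarrow> \<exists>v. fr f a v"
  shows "hol_fun f"
  unfolding hol_fun_def
proof
  fix a :: "'g vec" assume "a \<in> BE"
  then obtain v where v: "fr f a v" using assms by blast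
  then have lv: "is_l2 v" by (simp add: fr_def)
  show "\<exists>L :: 'g vec \<Rightarrow> complex.
      (\<forall>x y. is_l2 x \<longrightarrow> is_l2 y \<longrightarrow> L (vadd x y) = L x + L y) \<and>
      (\<forall>c x. is_l2 x \<longrightarrow> L (smul c x) = c * L x) \<and>
      (\<exists>C. \<forall>x. is_l2 x \<longrightarrow> cmod (L x) \<le> C * l2norm x) \<and>
      (\<forall>\<epsilon>>0. \<exists>\<delta>>0. \<forall>h. is_l2 h \<and> l2norm h < \<delta> \<longrightarrow>
          cmod (f (vadd a h) - f a - L h) \<le> \<epsilon> * l2norm h)"
  proof (intro exI[of _ "\<lambda>h. l2inner h v"] conjI allI impI)
    show "l2inner (vadd x y) v = l2inner x v + l2inner y v" if "is_l2 x" "is_l2 y" for x y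
      using that lv by (simp add: l2inner_add_left)
    show "l2inner (smul c x) v = c * l2inner x v" if "is_l2 x" for c x
      using that lv by (simp add: l2inner_smul_left)
    show "\<exists>C. \<forall>x. is_l2 x \<longrightarrow> cmod (l2inner x v) \<le> C * l2norm x"
      using cauchy_schwarz lv by (metis mult.commute)
    show "\<exists>\<delta>>0. \<forall>h. is_l2 h \<and> l2norm h < \<delta> \<longrightarrow> cmod (f (vadd a h) - f a - l2inner h v) \<le> \<epsilon> * l2norm h"
      if "\<epsilon> > 0" for \<epsilon> using v that by (simp add: fr_def)
  qed
qed

lemma fr_diff:
  fixes f g :: "'g vec \<Rightarrow> complex"
  assumes "fr f a v" "fr g a w"
  shows "fr (\<lambda>x. f x - g x) a (vsub v w)"
  unfolding fr_def
proof (intro conjI allI impI)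
  have lv: "is_l2 v" "is_l2 w" using assms by (auto simp: fr_def)
  then show "is_l2 (vsub v w)" by simp
  fix \<epsilon> :: real assume ep: "\<epsilon> > 0"
  obtain d1 where d1: "d1 > 0" "\<forall>h. is_l2 h \<and> l2norm h < d1 \<longrightarrow>
      cmod (f (vadd a h) - f a - l2inner h v) \<le> (\<epsilon>/2) * l2norm h"
    using assms(1) ep unfolding fr_def by (meson half_gt_zero)
  obtain d2 where d2: "d2 > 0" "\<forall>h. is_l2 h \<and> l2norm h < d2 \<longrightarrow>
      cmod (g (vadd a h) - g a - l2inner h w) \<le> (\<epsilon>/2) * l2norm h"
    using assms(2) ep unfolding fr_def by (meson half_gt_zero)
  show "\<exists>\<delta>>0. \<forall>h. is_l2 h \<and> l2norm h < \<delta> \<longrightarrow>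
      cmod (f (vadd a h) - g (vadd a h) - (f a - g a) - l2inner h (vsub v w)) \<le> \<epsilon> * l2norm h"
  proof (intro exI[of _ "min d1 d2"] conjI allI impI)
    show "min d1 d2 > 0" using d1 d2 by simp
    fix h :: "'g vec" assume hh: "is_l2 h \<and> l2norm h < min d1 d2"
    have "f (vadd a h) - g (vadd a h) - (f a - g a) - l2inner h (vsub v w)
       = (f (vadd a h) - f a - l2inner h v) - (g (vadd a h) - g a - l2inner h w)"
      using hh lv by (simp add: l2inner_sub_right)
    then have "cmod (f (vadd a h) - g (vadd a h) - (f a - g a) - l2inner h (vsub v w))
       \<le> cmod (f (vadd a h) - f a - l2inner h v) + cmod (g (vadd a h) - g a - l2inner h w)"
      by (metis norm_triangle_ineq4)
    also have "\<dots> \<le> (\<epsilon>/2) * l2norm h + (\<epsilon>/2) * l2norm h"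
      using d1(2) d2(2) hh by (intro add_mono) auto
    finally show "cmod (f (vadd a h) - g (vadd a h) - (f a - g a) - l2inner h (vsub v w)) \<le> \<epsilon> * l2norm h"
      by simp
  qed
qed

lemma hol_diff: "hol_fun f \<Longrightarrow> hol_fun g \<Longrightarrow> hol_fun (\<lambda>x. f x - g x)"
  by (rule fr_hol) (blast intro: fr_diff hol_grad)

lemma grad_diff: "hol_fun f \<Longrightarrow> hol_fun g \<Longrightarrow> a \<in> BE \<Longrightarrow>
    grad (\<lambda>x. f x - g x) a = vsub (grad f a) (grad g a)"
  by (rule grad_eq, rule fr_diff) (auto intro: hol_grad)

lemma grad_vanish:
  assumes g0: "\<And>x. x \<in> BE \<Longrightarrow> g x = 0" and a: "a \<in> BE"
  shows "grad g a = zerovec"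
proof (rule grad_eq)
  have la: "l2norm a < 1" using a BE_D by blast
  show "fr g a zerovec" unfolding fr_def
  proof (intro conjI allI impI is_l2_zero)
    fix \<epsilon> :: real assume ep: "\<epsilon> > 0"
    show "\<exists>\<delta>>0. \<forall>h. is_l2 h \<and> l2norm h < \<delta> \<longrightarrow> cmod (g (vadd a h) - g a - l2inner h zerovec) \<le> \<epsilon> * l2norm h"
      using la ep BE_open[OF a] g0 a by (intro exI[of _ "1 - l2norm a"]) auto
  qed
qed

lemma radial_bound:
  assumes "z \<in> BE" "is_l2 v"
  shows "cmod (l2inner z v) \<le> l2norm v"
proof -
  have "cmod (l2inner z v) \<le> l2norm z * l2norm v" using cauchy_schwarz assms BE_D by blast
  also have "\<dots> \<le> 1 * l2norm v" using BE_D[OF assms(1)] by (intro mult_right_mono) auto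
  finally show ?thesis by simp
qed

lemma smul_basis_BE:
  assumes "cmod t < 1" shows "smul t (basis_vec l) \<in> BE"
  using assms by (simp add: BE_def l2norm_smul)

lemma deriv_eps:
  assumes "(G has_field_derivative D) (at z)" "\<epsilon> > 0"
  shows "\<exists>\<delta>>0. \<forall>t. cmod t < \<delta> \<longrightarrow> cmod (G (z + t) - G z - D * t) \<le> \<epsilon> * cmod t"
proof -
  have "((\<lambda>y. (G y - G z) / (y - z)) \<longlongrightarrow> D) (at z)"
    using assms(1) has_field_derivative_iff by blast
  from LIM_D[OF this assms(2)] obtain s where s: "s > 0"
    "\<forall>x. x \<noteq> z \<and> cmod (x - z) < s \<longrightarrow> cmod ((G x - G z) / (x - z) - D) < \<epsilon>" by blast
  show ?thesis
  proof (intro exI[of _ s] conjI allI impI s(1))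
    fix t :: complex assume t: "cmod t < s"
    show "cmod (G (z + t) - G z - D * t) \<le> \<epsilon> * cmod t"
    proof (cases "t = 0")
      case False
      have "cmod ((G (z + t) - G z) / t - D) < \<epsilon>" using s(2)[rule_format, of "z + t"] t False by simp
      moreover have "G (z + t) - G z - D * t = ((G (z + t) - G z) / t - D) * t"
        using False by (simp add: field_simps)
      ultimately show ?thesis by (simp add: norm_mult mult_right_mono)
    qed simp
  qed
qed

lemma slice_deriv:
  fixes x :: "'g vec"
  assumes fv: "fr h (smul t0 x) v" and lx: "is_l2 x"
  shows "((\<lambda>\<mu>. h (smul \<mu> x)) has_field_derivative l2inner x v) (at t0)"
proof -
  have lv: "is_l2 v" using fv by (simp add: fr_def)
  have K: "l2norm x + 1 > 0" using l2norm_nonneg[of x] by linarith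
  show ?thesis unfolding has_field_derivative_iff
  proof (rule LIM_I)
    fix r :: real assume r: "r > 0"
    obtain \<delta> where d: "\<delta> > 0" "\<forall>hh. is_l2 hh \<and> l2norm hh < \<delta> \<longrightarrow>
      cmod (h (vadd (smul t0 x) hh) - h (smul t0 x) - l2inner hh v) \<le> (r / (2 * (l2norm x + 1))) * l2norm hh"
      using fv r K unfolding fr_def by (metis divide_pos_pos mult_pos_pos zero_less_numeral)
    show "\<exists>s>0. \<forall>w. w \<noteq> t0 \<and> norm (w - t0) < s \<longrightarrow>
        norm ((h (smul w x) - h (smul t0 x)) / (w - t0) - l2inner x v) < r"
    proof (intro exI[of _ "\<delta> / (l2norm x + 1)"] conjI allI impI)
      show "\<delta> / (l2norm x + 1) > 0" using d K by simp
      fix w assume w: "w \<noteq> t0 \<and> norm (w - t0) < \<delta> / (l2norm x + 1)"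
      let ?hh = "smul (w - t0) x"
      have lhh: "is_l2 ?hh" using lx by simp
      have nhh: "l2norm ?hh = cmod (w - t0) * l2norm x" using lx by (simp add: l2norm_smul)
      have "cmod (w - t0) * l2norm x \<le> cmod (w - t0) * (l2norm x + 1)" by (intro mult_left_mono) auto
      also have "\<dots> < \<delta>" using w K by (simp add: field_simps)
      finally have nhd: "l2norm ?hh < \<delta>" using nhh by simp
      have vs: "vadd (smul t0 x) ?hh = smul w x" by (auto simp: vadd_def smul_def algebra_simps)
      have ih: "l2inner ?hh v = (w - t0) * l2inner x v" using lx lv by (simp add: l2inner_smul_left)
      have E: "cmod (h (smul w x) - h (smul t0 x) - (w - t0) * l2inner x v)
          \<le> (r / (2 * (l2norm x + 1))) * (cmod (w - t0) * l2norm x)"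
        using d(2) lhh nhd vs ih nhh by metis
      have wl: "w - t0 \<noteq> 0" using w by simp
      have "(h (smul w x) - h (smul t0 x)) / (w - t0) - l2inner x v
          = (h (smul w x) - h (smul t0 x) - (w - t0) * l2inner x v) / (w - t0)"
        using wl by (simp add: field_simps)
      then have "norm ((h (smul w x) - h (smul t0 x)) / (w - t0) - l2inner x v)
          = cmod (h (smul w x) - h (smul t0 x) - (w - t0) * l2inner x v) / cmod (w - t0)"
        by (simp add: norm_divide)
      also have "\<dots> \<le> (r / (2 * (l2norm x + 1))) * (cmod (w - t0) * l2norm x) / cmod (w - t0)"
        using E wl by (intro divide_right_mono) auto
      also have "\<dots> = (r / (2 * (l2norm x + 1))) * l2norm x" using wl by simp
      also have "\<dots> = r * (l2norm x / (l2norm x + 1)) / 2" by simp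
      also have "\<dots> < r"
      proof -
        have "l2norm x / (l2norm x + 1) \<le> 1" using K by simp
        then have "r * (l2norm x / (l2norm x + 1)) \<le> r" using r mult_left_le[of "l2norm x / (l2norm x + 1)" r] by linarith
        moreover have gen: "\<And>A. A \<le> r \<Longrightarrow> A / 2 < r" using r by linarith
        ultimately show ?thesis by blast
      qed
      finally show "norm ((h (smul w x) - h (smul t0 x)) / (w - t0) - l2inner x v) < r" .
    qed
  qed
qed


lemma smul_one[simp]: "smul 1 x = x" by (simp add: smul_def)
lemma smul_zero_left[simp]: "smul 0 x = zerovec" by (simp add: smul_def zerovec_def)

lemma inv_nonneg: "inv_norm h \<ge> 0"
  unfolding inv_norm_def
  by (rule SUP_upper2[of zerovec]) (auto simp: BE_def)

lemma pointwise_bound: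
  fixes h :: "'g vec \<Rightarrow> complex"
  assumes h: "hol_fun h" and x: "x \<in> BE" and M: "inv_norm h \<le> ereal M"
  shows "cmod (h x - h zerovec) \<le> M / (1 - (l2norm x)\<^sup>2)"
proof -
  have lx: "is_l2 x" and nx: "l2norm x < 1" using BE_D[OF x] by auto
  have n1: "(l2norm x)\<^sup>2 < 1" using norm_sq_lt1[OF x] .
  let ?S = "cball (0::complex) 1"
  let ?f = "\<lambda>\<mu>. h (smul \<mu> x)"
  let ?f' = "\<lambda>\<mu>. l2inner x (grad h (smul \<mu> x))"
  have inS: "smul \<mu> x \<in> BE" if "\<mu> \<in> ?S" for \<mu>
  proof -
    have "l2norm (smul \<mu> x) = cmod \<mu> * l2norm x" using lx by (simp add: l2norm_smul)
    also have "\<dots> \<le> 1 * l2norm x" using that by (intro mult_right_mono) auto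
    finally show ?thesis using nx lx by (simp add: BE_def)
  qed
  have "ereal 0 \<le> ereal M" using order_trans[OF inv_nonneg[of h] M] by (simp add: zero_ereal_def)
  then have M0: "M \<ge> 0" by simp
  show ?thesis
  proof -
    have "cmod (?f 1 - ?f 0) \<le> (M / (1 - (l2norm x)\<^sup>2)) * cmod (1 - 0)"
    proof (rule field_differentiable_bound[of ?S])
      show "convex ?S" by simp
      show "(?f has_field_derivative ?f' \<mu>) (at \<mu> within ?S)" if "\<mu> \<in> ?S" for \<mu>
        using slice_deriv[OF hol_grad[OF h inS[OF that]] lx] has_field_derivative_at_within by blast
      show "cmod (?f' \<mu>) \<le> M / (1 - (l2norm x)\<^sup>2)" if "\<mu> \<in> ?S" for \<mu>
      proof -
        let ?y = "smul \<mu> x"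
        have y: "?y \<in> BE" using inS[OF that] .
        have lg: "is_l2 (grad h ?y)" using hol_grad[OF h y] by (simp add: fr_def)
        have ny: "l2norm ?y \<le> l2norm x" using lx that by (simp add: l2norm_smul mult_left_le_one_le)
        have ny2: "(l2norm ?y)\<^sup>2 \<le> (l2norm x)\<^sup>2" using ny by (simp add: power_mono)
        have pos: "1 - (l2norm x)\<^sup>2 > 0" using n1 by simp
        have "ereal ((1 - (l2norm ?y)\<^sup>2) * l2norm (grad h ?y)) \<le> ereal M"
          using inv_lower[OF h y] M by (rule order_trans)
        then have A: "(1 - (l2norm ?y)\<^sup>2) * l2norm (grad h ?y) \<le> M" by simp
        have "(1 - (l2norm x)\<^sup>2) * l2norm (grad h ?y) \<le> (1 - (l2norm ?y)\<^sup>2) * l2norm (grad h ?y)"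
          using ny2 by (intro mult_right_mono) auto
        with A have "(1 - (l2norm x)\<^sup>2) * l2norm (grad h ?y) \<le> M" by linarith
        then have "l2norm (grad h ?y) \<le> M / (1 - (l2norm x)\<^sup>2)"
          using pos by (simp add: field_simps)
        moreover have "cmod (?f' \<mu>) \<le> l2norm (grad h ?y)" by (rule radial_bound[OF x lg])
        ultimately show ?thesis by linarith
      qed
      show "1 \<in> ?S" "0 \<in> ?S" by auto
    qed
    then show ?thesis by simp
  qed
qed

lemma coord_fr:
  fixes G :: "complex \<Rightarrow> complex"
  assumes G: "G holomorphic_on ball 0 1" and a: "a \<in> BE"
  shows "fr (\<lambda>x. G (x k)) a (smul (cnj (deriv G (a k))) (basis_vec k))"
proof -
  have la: "is_l2 a" using BE_D[OF a] by blast
  have ak: "a k \<in> ball 0 1" using comp_le[OF la, of k] BE_D[OF a] by auto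
  have D: "(G has_field_derivative deriv G (a k)) (at (a k))"
    using holomorphic_derivI[OF G open_ball ak, of UNIV] by simp
  show ?thesis unfolding fr_def
  proof (intro conjI allI impI)
    show "is_l2 (smul (cnj (deriv G (a k))) (basis_vec k))" by simp
    fix \<epsilon> :: real assume ep: "\<epsilon> > 0"
    obtain \<delta> where d: "\<delta> > 0" "\<forall>t. cmod t < \<delta> \<longrightarrow> cmod (G (a k + t) - G (a k) - deriv G (a k) * t) \<le> \<epsilon> * cmod t"
      using deriv_eps[OF D ep] by blast
    show "\<exists>\<delta>>0. \<forall>h. is_l2 h \<and> l2norm h < \<delta> \<longrightarrow>
       cmod (G (vadd a h k) - G (a k) - l2inner h (smul (cnj (deriv G (a k))) (basis_vec k))) \<le> \<epsilon> * l2norm h"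
    proof (intro exI[of _ \<delta>] conjI allI impI d(1))
      fix h :: "'a vec" assume hh: "is_l2 h \<and> l2norm h < \<delta>"
      have hk: "cmod (h k) \<le> l2norm h" using comp_le[of h k] hh by blast
      have hkd: "cmod (h k) < \<delta>" using hk hh by linarith
      have "cmod (G (a k + h k) - G (a k) - deriv G (a k) * h k) \<le> \<epsilon> * cmod (h k)"
        using d(2) hkd by blast
      also have "\<dots> \<le> \<epsilon> * l2norm h" using hk ep by (intro mult_left_mono) auto
      finally have F: "cmod (G (a k + h k) - G (a k) - deriv G (a k) * h k) \<le> \<epsilon> * l2norm h" .
      have e1: "l2inner h (smul (cnj (deriv G (a k))) (basis_vec k)) = deriv G (a k) * h k"
        using hh by (simp add: l2inner_smul_right)
      have e2: "vadd a h k = a k + h k" by (simp add: vadd_def)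
      show "cmod (G (vadd a h k) - G (a k) - l2inner h (smul (cnj (deriv G (a k))) (basis_vec k))) \<le> \<epsilon> * l2norm h"
        unfolding e1 e2 by (rule F)
    qed
  qed
qed

lemma coord_hol: "G holomorphic_on ball 0 1 \<Longrightarrow> hol_fun (\<lambda>x. G (x k))"
  by (rule fr_hol) (blast intro: coord_fr)

lemma coord_grad: "G holomorphic_on ball 0 1 \<Longrightarrow> a \<in> BE \<Longrightarrow>
   grad (\<lambda>x. G (x k)) a = smul (cnj (deriv G (a k))) (basis_vec k)"
  by (rule grad_eq, rule coord_fr)

lemma cbloch_upper: "t \<in> ball 0 1 \<Longrightarrow> ereal ((1 - (cmod t)\<^sup>2) * cmod (deriv G t)) \<le> cbloch_semi G"
  unfolding cbloch_semi_def by (rule SUP_upper2) auto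

lemma coord_semi:
  assumes G: "G holomorphic_on ball 0 1"
  shows "bloch_semi (\<lambda>x. G (x k)) \<le> cbloch_semi G"
  unfolding bloch_semi_def
proof (rule SUP_least)
  fix x :: "'a vec" assume x: "x \<in> BE"
  have la: "is_l2 x" using BE_D[OF x] by blast
  have ak: "x k \<in> ball 0 1" using comp_le[OF la, of k] BE_D[OF x] by auto
  have xk2: "(cmod (x k))\<^sup>2 \<le> (l2norm x)\<^sup>2" using power_mono[OF comp_le[OF la] norm_ge_zero, of k 2] .
  have "(1 - (l2norm x)\<^sup>2) * l2norm (grad (\<lambda>x. G (x k)) x) = (1 - (l2norm x)\<^sup>2) * cmod (deriv G (x k))"
    by (simp add: coord_grad[OF G x] l2norm_smul)
  also have "\<dots> \<le> (1 - (cmod (x k))\<^sup>2) * cmod (deriv G (x k))"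
    using xk2 by (intro mult_right_mono) auto
  finally show "ereal ((1 - (l2norm x)\<^sup>2) * l2norm (grad (\<lambda>x. G (x k)) x)) \<le> cbloch_semi G"
    using cbloch_upper[OF ak, of G] by (meson ereal_less_eq(3) order_trans)
qed

lemma coord_inv:
  assumes G: "G holomorphic_on ball 0 1"
  shows "inv_norm (\<lambda>x. G (x k)) \<le> cbloch_semi G"
  unfolding inv_norm_def
proof (rule SUP_least)
  fix x :: "'a vec" assume x: "x \<in> BE"
  have la: "is_l2 x" using BE_D[OF x] by blast
  have ak: "x k \<in> ball 0 1" using comp_le[OF la, of k] BE_D[OF x] by auto
  have "grad ((\<lambda>x. G (x k)) \<circ> mobius x) zerovec = Dvec x (smul (cnj (deriv G (x k))) (basis_vec k))"
    using grad_mob[OF coord_hol[OF G] x] coord_grad[OF G x] by simp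
  also have "\<dots> = smul (cnj (deriv G (x k))) (Dvec x (basis_vec k))"
    using la by (simp add: Dvec_smul)
  finally have "l2norm (grad ((\<lambda>x. G (x k)) \<circ> mobius x) zerovec) = cmod (deriv G (x k)) * l2norm (Dvec x (basis_vec k))"
    using la by (simp add: l2norm_smul)
  also have "\<dots> \<le> cmod (deriv G (x k)) * (1 - (cmod (x k))\<^sup>2)"
    using Dvec_basis[OF x] by (intro mult_left_mono) auto
  finally show "ereal (l2norm (grad ((\<lambda>x. G (x k)) \<circ> mobius x) zerovec)) \<le> cbloch_semi G"
    using cbloch_upper[OF ak, of G] by (metis ereal_less_eq(3) mult.commute order_trans)
qed

lemma selfmap_BE: "hol_selfmap \<phi> \<Longrightarrow> x \<in> BE \<Longrightarrow> \<phi> x \<in> BE"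
  unfolding hol_selfmap_def by blast

lemma selfmap_coord_fr:
  fixes \<phi> :: "'g vec \<Rightarrow> 'g vec"
  assumes hs: "hol_selfmap \<phi>"
  shows "hol_fun (\<lambda>x. \<phi> x k)"
  unfolding hol_fun_def
proof
  fix a :: "'g vec" assume a: "a \<in> BE"
  have la: "is_l2 a" and na: "l2norm a < 1" using BE_D[OF a] by auto
  obtain T where T: "\<forall>x. is_l2 x \<longrightarrow> is_l2 (T x)"
      "\<forall>x y. is_l2 x \<longrightarrow> is_l2 y \<longrightarrow> T (vadd x y) = vadd (T x) (T y)"
      "\<forall>c x. is_l2 x \<longrightarrow> T (smul c x) = smul c (T x)"
      "\<exists>C. \<forall>x. is_l2 x \<longrightarrow> l2norm (T x) \<le> C * l2norm x"
      "\<forall>\<epsilon>>0. \<exists>\<delta>>0. \<forall>h. is_l2 h \<and> l2norm h < \<delta> \<longrightarrow>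
          l2norm (vsub (vsub (\<phi> (vadd a h)) (\<phi> a)) (T h)) \<le> \<epsilon> * l2norm h"
    using hs[unfolded hol_selfmap_def, THEN conjunct2, rule_format, OF a] by blast
  have pa: "\<phi> a \<in> BE" using selfmap_BE[OF hs a] .
  obtain C where C: "\<forall>x. is_l2 x \<longrightarrow> l2norm (T x) \<le> C * l2norm x" using T(4) by blast
  show "\<exists>L :: 'g vec \<Rightarrow> complex.
      (\<forall>x y. is_l2 x \<longrightarrow> is_l2 y \<longrightarrow> L (vadd x y) = L x + L y) \<and>
      (\<forall>c x. is_l2 x \<longrightarrow> L (smul c x) = c * L x) \<and>
      (\<exists>C. \<forall>x. is_l2 x \<longrightarrow> cmod (L x) \<le> C * l2norm x) \<and>
      (\<forall>\<epsilon>>0. \<exists>\<delta>>0. \<forall>h. is_l2 h \<and> l2norm h < \<delta> \<longrightarrow>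
          cmod (\<phi> (vadd a h) k - \<phi> a k - L h) \<le> \<epsilon> * l2norm h)"
  proof (intro exI[of _ "\<lambda>h. T h k"] conjI allI impI)
    show "T (vadd x y) k = T x k + T y k" if "is_l2 x" "is_l2 y" for x y
    proof -
      have "T (vadd x y) = vadd (T x) (T y)" using T(2) that by blast
      then show ?thesis by (simp add: vadd_def)
    qed
    show "T (smul c x) k = c * T x k" if "is_l2 x" for c x
    proof -
      have "T (smul c x) = smul c (T x)" using T(3) that by blast
      then show ?thesis by (simp add: smul_def)
    qed
    show "\<exists>C. \<forall>x. is_l2 x \<longrightarrow> cmod (T x k) \<le> C * l2norm x"
    proof (intro exI[of _ C] allI impI)
      fix x :: "'g vec" assume lx: "is_l2 x"
      have lt: "is_l2 (T x)" using T(1) lx by simp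
      have "cmod (T x k) \<le> l2norm (T x)" by (rule comp_le[OF lt])
      also have "\<dots> \<le> C * l2norm x" using C lx by blast
      finally show "cmod (T x k) \<le> C * l2norm x" .
    qed
    fix \<epsilon> :: real assume ep: "\<epsilon> > 0"
    obtain \<delta> where d: "\<delta> > 0" "\<forall>h. is_l2 h \<and> l2norm h < \<delta> \<longrightarrow>
          l2norm (vsub (vsub (\<phi> (vadd a h)) (\<phi> a)) (T h)) \<le> \<epsilon> * l2norm h"
      using T(5) ep by blast
    show "\<exists>\<delta>>0. \<forall>h. is_l2 h \<and> l2norm h < \<delta> \<longrightarrow> cmod (\<phi> (vadd a h) k - \<phi> a k - T h k) \<le> \<epsilon> * l2norm h"
    proof (intro exI[of _ "min \<delta> (1 - l2norm a)"] conjI allI impI)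
      show "min \<delta> (1 - l2norm a) > 0" using d na by simp
      fix h :: "'g vec" assume hh: "is_l2 h \<and> l2norm h < min \<delta> (1 - l2norm a)"
      have ah: "vadd a h \<in> BE" using BE_open[OF a] hh by auto
      have pah: "\<phi> (vadd a h) \<in> BE" using selfmap_BE[OF hs ah] .
      have l: "is_l2 (vsub (vsub (\<phi> (vadd a h)) (\<phi> a)) (T h))"
        using BE_D[OF pah] BE_D[OF pa] T(1) hh by simp
      have "cmod (\<phi> (vadd a h) k - \<phi> a k - T h k) = cmod (vsub (vsub (\<phi> (vadd a h)) (\<phi> a)) (T h) k)"
        by (simp add: vsub_def)
      also have "\<dots> \<le> l2norm (vsub (vsub (\<phi> (vadd a h)) (\<phi> a)) (T h))" by (rule comp_le[OF l])
      also have "\<dots> \<le> \<epsilon> * l2norm h" using d(2) hh by simp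
      finally show "cmod (\<phi> (vadd a h) k - \<phi> a k - T h k) \<le> \<epsilon> * l2norm h" .
    qed
  qed
qed

lemma fr_chain:
  fixes p :: "'g vec \<Rightarrow> complex"
  assumes fp: "fr p z w" and G: "(G has_field_derivative D) (at (p z))"
  shows "fr (\<lambda>x. G (p x)) z (smul (cnj D) w)"
  unfolding fr_def
proof (intro conjI allI impI)
  have lw: "is_l2 w" using fp by (simp add: fr_def)
  then show "is_l2 (smul (cnj D) w)" by simp
  fix \<epsilon> :: real assume ep: "\<epsilon> > 0"
  define K where "K = l2norm w + 1"
  have K: "K > 0" using l2norm_nonneg[of w] by (simp add: K_def add_nonneg_pos)
  have DK: "cmod D + 1 > 0" by (simp add: add_nonneg_pos)
  obtain d1 where d1: "d1 > 0" "\<forall>h. is_l2 h \<and> l2norm h < d1 \<longrightarrow>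
      cmod (p (vadd z h) - p z - l2inner h w) \<le> 1 * l2norm h"
    using fp unfolding fr_def by (meson zero_less_one)
  obtain d2 where d2: "d2 > 0" "\<forall>t. cmod t < d2 \<longrightarrow>
      cmod (G (p z + t) - G (p z) - D * t) \<le> (\<epsilon> / (2 * K)) * cmod t"
    using deriv_eps[OF G, of "\<epsilon> / (2 * K)"] ep K by auto
  obtain d3 where d3: "d3 > 0" "\<forall>h. is_l2 h \<and> l2norm h < d3 \<longrightarrow>
      cmod (p (vadd z h) - p z - l2inner h w) \<le> (\<epsilon> / (2 * (cmod D + 1))) * l2norm h"
    using fp ep DK unfolding fr_def by (metis divide_pos_pos mult_pos_pos zero_less_numeral)
  show "\<exists>\<delta>>0. \<forall>h. is_l2 h \<and> l2norm h < \<delta> \<longrightarrow>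
      cmod (G (p (vadd z h)) - G (p z) - l2inner h (smul (cnj D) w)) \<le> \<epsilon> * l2norm h"
  proof (intro exI[of _ "min d1 (min d3 (d2 / K))"] conjI allI impI)
    show "min d1 (min d3 (d2 / K)) > 0" using d1 d2 d3 K by simp
    fix h :: "'g vec" assume hh: "is_l2 h \<and> l2norm h < min d1 (min d3 (d2 / K))"
    define t where "t = p (vadd z h) - p z"
    have e1: "cmod (t - l2inner h w) \<le> l2norm h" using d1(2) hh by (auto simp: t_def)
    have "cmod t \<le> cmod (t - l2inner h w) + cmod (l2inner h w)"
      by (metis add.commute diff_add_cancel norm_triangle_ineq)
    also have "\<dots> \<le> l2norm h + l2norm h * l2norm w"
      using e1 cauchy_schwarz[of h w] hh lw by (intro add_mono) auto
    finally have tb: "cmod t \<le> K * l2norm h" by (simp add: K_def algebra_simps)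
    have "K * l2norm h < K * (d2 / K)" using hh K by (intro mult_strict_left_mono) auto
    then have tl: "cmod t < d2" using tb K by simp
    have e2: "cmod (G (p z + t) - G (p z) - D * t) \<le> (\<epsilon> / (2 * K)) * cmod t" using d2(2) tl by blast
    have e3: "cmod (t - l2inner h w) \<le> (\<epsilon> / (2 * (cmod D + 1))) * l2norm h" using d3(2) hh by (auto simp: t_def)
    have ih: "l2inner h (smul (cnj D) w) = D * l2inner h w" using hh lw by (simp add: l2inner_smul_right)
    have "G (p (vadd z h)) - G (p z) - l2inner h (smul (cnj D) w)
        = (G (p z + t) - G (p z) - D * t) + D * (t - l2inner h w)"
      by (simp add: ih t_def algebra_simps)
    then have "cmod (G (p (vadd z h)) - G (p z) - l2inner h (smul (cnj D) w))
        \<le> cmod (G (p z + t) - G (p z) - D * t) + cmod D * cmod (t - l2inner h w)"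
      by (metis norm_mult norm_triangle_ineq)
    also have "\<dots> \<le> (\<epsilon> / (2 * K)) * (K * l2norm h) + cmod D * ((\<epsilon> / (2 * (cmod D + 1))) * l2norm h)"
    proof (intro add_mono mult_left_mono)
      show "cmod (G (p z + t) - G (p z) - D * t) \<le> \<epsilon> / (2 * K) * (K * l2norm h)"
        using e2 tb ep K by (meson order_trans mult_left_mono divide_nonneg_pos less_imp_le mult_pos_pos zero_less_numeral)
    qed (use e3 in auto)
    also have "\<dots> = (\<epsilon>/2) * l2norm h + (\<epsilon>/2) * (cmod D / (cmod D + 1)) * l2norm h"
      using K DK by (simp add: field_simps)
    also have "\<dots> \<le> (\<epsilon>/2) * l2norm h + (\<epsilon>/2) * 1 * l2norm h"
      using ep DK by (intro add_left_mono mult_right_mono mult_left_mono) auto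
    also have "\<dots> = \<epsilon> * l2norm h" by simp
    finally show "cmod (G (p (vadd z h)) - G (p z) - l2inner h (smul (cnj D) w)) \<le> \<epsilon> * l2norm h" .
  qed
qed


definition Gw :: "complex \<Rightarrow> complex \<Rightarrow> complex" where
  "Gw w t = complex_of_real (1 - (cmod w)\<^sup>2) * t / (1 - cnj w * t)"

lemma pick_id: "(cmod (1 - cnj w * t))\<^sup>2 = (cmod (w - t))\<^sup>2 + (1 - (cmod w)\<^sup>2) * (1 - (cmod t)\<^sup>2)"
  apply (simp add: cmod_power2)
  apply algebra
  done

lemma denom_bound:
  assumes "cmod w < 1" "cmod t < 1"
  shows "cmod (1 - cnj w * t) \<ge> 1 - cmod t" and "1 - cnj w * t \<noteq> 0"
proof -
  have "cmod (cnj w * t) = cmod w * cmod t" by (simp add: norm_mult)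
  also have "\<dots> \<le> 1 * cmod t" using assms by (intro mult_right_mono) auto
  finally have a: "cmod (cnj w * t) \<le> cmod t" by simp
  have "1 - cmod (cnj w * t) \<le> cmod (1 - cnj w * t)"
    using norm_triangle_ineq2[of 1 "cnj w * t"] by simp
  then show b: "cmod (1 - cnj w * t) \<ge> 1 - cmod t" using a by linarith
  show "1 - cnj w * t \<noteq> 0" using b assms(2) by auto
qed

lemma Gw_deriv:
  assumes w: "cmod w < 1" and t: "cmod t < 1"
  shows "(Gw w has_field_derivative complex_of_real (1 - (cmod w)\<^sup>2) / (1 - cnj w * t)\<^sup>2) (at t)"
proof -
  have nz: "1 - cnj w * t \<noteq> 0" using denom_bound[OF w t] by blast
  have "((\<lambda>t. complex_of_real (1 - (cmod w)\<^sup>2) * t / (1 - cnj w * t)) has_field_derivative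
        (complex_of_real (1 - (cmod w)\<^sup>2) * (1 - cnj w * t) - complex_of_real (1 - (cmod w)\<^sup>2) * t * (- cnj w))
           / (1 - cnj w * t)\<^sup>2) (at t)"
    using nz by (auto intro!: derivative_eq_intros simp: power2_eq_square)
  moreover have "(complex_of_real (1 - (cmod w)\<^sup>2) * (1 - cnj w * t) - complex_of_real (1 - (cmod w)\<^sup>2) * t * (- cnj w))
      = complex_of_real (1 - (cmod w)\<^sup>2)" by (simp add: algebra_simps)
  ultimately show ?thesis unfolding Gw_def by simp
qed

lemma Gw_deriv_eq: "cmod w < 1 \<Longrightarrow> cmod t < 1 \<Longrightarrow>
   deriv (Gw w) t = complex_of_real (1 - (cmod w)\<^sup>2) / (1 - cnj w * t)\<^sup>2"
  using Gw_deriv DERIV_imp_deriv by blast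

lemma Gw_hol: "cmod w < 1 \<Longrightarrow> Gw w holomorphic_on ball 0 1"
  unfolding holomorphic_on_open[OF open_ball] by (metis Gw_deriv mem_ball_0)

lemma nw: "cmod w < 1 \<Longrightarrow> cmod (complex_of_real (1 - (cmod w)\<^sup>2)) = 1 - (cmod w)\<^sup>2"
proof -
  assume w: "cmod w < 1"
  have w2: "(cmod w)\<^sup>2 < 1" using w by (simp add: abs_square_less_1)
  show ?thesis by (subst norm_of_real) (use w2 in simp)
qed

lemma Gw_0[simp]: "Gw w 0 = 0"
  by (simp add: Gw_def)

lemma Gw_bound:
  assumes w: "cmod w < 1" and t: "cmod t < 1"
  shows "(1 - (cmod t)\<^sup>2) * cmod (deriv (Gw w) t) \<le> 1"
proof -
  have w2: "(cmod w)\<^sup>2 < 1" using w by (simp add: abs_square_less_1)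
  have t2: "(cmod t)\<^sup>2 < 1" using t by (simp add: abs_square_less_1)
  have nz: "1 - cnj w * t \<noteq> 0" using denom_bound[OF w t] by blast
  have P: "(cmod (1 - cnj w * t))\<^sup>2 > 0" using nz by simp
  have "cmod (deriv (Gw w) t) = cmod (complex_of_real (1 - (cmod w)\<^sup>2)) / (cmod (1 - cnj w * t))\<^sup>2"
    by (simp only: Gw_deriv_eq[OF w t] norm_divide norm_power)
  then have "cmod (deriv (Gw w) t) = (1 - (cmod w)\<^sup>2) / (cmod (1 - cnj w * t))\<^sup>2"
    by (simp only: nw[OF w])
  moreover have "(1 - (cmod t)\<^sup>2) * (1 - (cmod w)\<^sup>2) \<le> (cmod (1 - cnj w * t))\<^sup>2"
    using pick_id[of w t] by (simp add: mult.commute)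
  ultimately have "(1 - (cmod t)\<^sup>2) * cmod (deriv (Gw w) t)
      = ((1 - (cmod t)\<^sup>2) * (1 - (cmod w)\<^sup>2)) / (cmod (1 - cnj w * t))\<^sup>2" by simp
  also have "\<dots> \<le> (cmod (1 - cnj w * t))\<^sup>2 / (cmod (1 - cnj w * t))\<^sup>2"
    using \<open>(1 - (cmod t)\<^sup>2) * (1 - (cmod w)\<^sup>2) \<le> (cmod (1 - cnj w * t))\<^sup>2\<close> P
    by (intro divide_right_mono) auto
  also have "\<dots> = 1" using P by simp
  finally show ?thesis .
qed

lemma Gw_at_w:
  assumes w: "cmod w < 1"
  shows "cmod (deriv (Gw w) w) = 1 / (1 - (cmod w)\<^sup>2)"
proof -
  have w2: "(cmod w)\<^sup>2 < 1" using w by (simp add: abs_square_less_1)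
  have e: "1 - cnj w * w = complex_of_real (1 - (cmod w)\<^sup>2)"
    using cnj_sq[of w] by (simp add: mult.commute)
  have "cmod (deriv (Gw w) w) = cmod (complex_of_real (1 - (cmod w)\<^sup>2)) / (cmod (complex_of_real (1 - (cmod w)\<^sup>2)))\<^sup>2"
    by (simp only: Gw_deriv_eq[OF w w] e norm_divide norm_power)
  also have "\<dots> = (1 - (cmod w)\<^sup>2) / (1 - (cmod w)\<^sup>2)\<^sup>2" by (simp only: nw[OF w])
  also have "\<dots> = 1 / (1 - (cmod w)\<^sup>2)" using w2 by (simp add: power2_eq_square)
  finally show ?thesis .
qed

lemma Gw_small:
  assumes w: "cmod w < 1" and s: "cmod s < 1"
  shows "cmod (Gw w s) \<le> (1 - (cmod w)\<^sup>2) * cmod s / (1 - cmod s)"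
proof -
  have w2: "(cmod w)\<^sup>2 < 1" using w by (simp add: abs_square_less_1)
  have d: "cmod (1 - cnj w * s) \<ge> 1 - cmod s" using denom_bound[OF w s] by blast
  have "cmod (Gw w s) = cmod (complex_of_real (1 - (cmod w)\<^sup>2)) * cmod s / cmod (1 - cnj w * s)"
    by (simp only: Gw_def norm_divide norm_mult)
  then have "cmod (Gw w s) = (1 - (cmod w)\<^sup>2) * cmod s / cmod (1 - cnj w * s)"
    by (simp only: nw[OF w])
  also have "\<dots> \<le> (1 - (cmod w)\<^sup>2) * cmod s / (1 - cmod s)"
  proof (rule divide_left_mono)
    show "1 - cmod s \<le> cmod (1 - cnj w * s)" by (rule d)
    show "0 \<le> (1 - (cmod w)\<^sup>2) * cmod s" using w2 by simp
    have "cmod (1 - cnj w * s) > 0" using d s by linarith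
    then show "0 < cmod (1 - cnj w * s) * (1 - cmod s)" using s by simp
  qed
  finally show ?thesis .
qed

lemma coord_to_zero:
  fixes kk :: "nat \<Rightarrow> 'g"
  assumes inj: "inj kk" and y: "is_l2 y"
  shows "(\<lambda>j. y (kk j)) \<longlonglongrightarrow> 0"
proof (rule LIMSEQ_I)
  fix r :: real assume r: "r > 0"
  obtain F where F: "finite F" "l2norm (vsub y (restr F y)) \<le> r/2"
    using tail_small[OF y, of "r/2"] r by auto
  have fin: "finite (kk -` F)" using finite_vimageI[OF F(1) inj] .
  then obtain N where N: "kk -` F \<subseteq> {..<N}" using finite_nat_iff_bounded by blast
  show "\<exists>no. \<forall>n\<ge>no. norm (y (kk n) - 0) < r"
  proof (intro exI[of _ N] allI impI)
    fix n assume n: "n \<ge> N"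
    then have nF: "kk n \<notin> F" using N by auto
    have ld: "is_l2 (vsub y (restr F y))" using y F by simp
    have "cmod (y (kk n)) = cmod (vsub y (restr F y) (kk n))" using nF by (simp add: vsub_def restr_def)
    also have "\<dots> \<le> l2norm (vsub y (restr F y))" by (rule comp_le[OF ld])
    finally show "norm (y (kk n) - 0) < r" using F r by simp
  qed
qed


lemma ereal_split:
  assumes "ereal a + b < ereal e" "a \<ge> 0" "b \<ge> 0"
  shows "b \<le> ereal e" "a \<le> e"
proof -
  have "b \<le> ereal a + b" by (rule add_increasing) (use assms(2) in auto)
  then show "b \<le> ereal e" using assms(1) by (meson order_le_less_trans less_imp_le)
  have "ereal a \<le> ereal a + b" by (rule add_increasing2) (use assms(3) in auto)
  then have "ereal a < ereal e" by (rule order_le_less_trans[OF _ assms(1)])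
  then show "a \<le> e" by simp
qed

lemma key:
  fixes \<phi> :: "'g vec \<Rightarrow> 'g vec" and G :: "nat \<Rightarrow> complex \<Rightarrow> complex" and kk :: "nat \<Rightarrow> 'g"
  assumes hs: "hol_selfmap \<phi>" and cc: "compact_comp_op \<phi>"
    and hol: "\<And>j. G j holomorphic_on ball 0 1"
    and G0: "\<And>j. G j 0 = 0"
    and bd: "\<And>j t. t \<in> ball 0 1 \<Longrightarrow> (1 - (cmod t)\<^sup>2) * cmod (deriv (G j) t) \<le> 1"
    and pw: "\<And>x. x \<in> BE \<Longrightarrow> (\<lambda>j. G j (\<phi> x (kk j))) \<longlonglongrightarrow> 0"
  shows "\<exists>r::nat\<Rightarrow>nat. strict_mono r \<and> (\<forall>\<epsilon>>0. \<exists>N::nat. \<forall>z\<in>BE.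
           (1 - (l2norm z)\<^sup>2) * l2norm (grad (\<lambda>x. G (r N) (\<phi> x (kk (r N)))) z) \<le> \<epsilon>)"
proof -
  define F where "F j = (\<lambda>x::'g vec. G j (x (kk j)))" for j
  have cb: "cbloch_semi (G j) \<le> 1" for j
    unfolding cbloch_semi_def by (rule SUP_least) (use bd in auto)
  have Fb: "F j \<in> bloch_space" for j
  proof -
    have "bloch_semi (F j) \<le> 1" using coord_semi[OF hol, of j "kk j"] cb[of j] by (simp add: F_def)
    moreover have "(1::ereal) < \<infinity>" by simp
    ultimately have "bloch_semi (F j) < \<infinity>" by (rule order_le_less_trans)
    then show ?thesis using coord_hol[OF hol] by (simp add: bloch_space_def F_def)
  qed
  have Fn: "bloch_norm (F j) \<le> ereal 1" for j
  proof -
    have "inv_norm (F j) \<le> 1" using coord_inv[OF hol, of j "kk j"] cb[of j] by (simp add: F_def)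
    moreover have "F j zerovec = 0" using G0 by (simp add: F_def zerovec_def)
    ultimately show ?thesis by (simp add: bloch_norm_def one_ereal_def)
  qed
  have cc1: "\<And>f. f \<in> bloch_space \<Longrightarrow> f \<circ> \<phi> \<in> bloch_space"
    using cc[unfolded compact_comp_op_def, THEN conjunct1] by (rule bspec)
  have all: "\<forall>n. F n \<in> bloch_space" using Fb by blast
  have ex1: "\<exists>C. \<forall>n. bloch_norm (F n) \<le> ereal C" using Fn by blast
  have "\<exists>r g. strict_mono r \<and> g \<in> bloch_space \<and>
           (\<lambda>n. bloch_norm (\<lambda>x. F (r n) (\<phi> x) - g x)) \<longlonglongrightarrow> 0"
    by (rule cc[unfolded compact_comp_op_def, THEN conjunct2, rule_format, OF Fb ex1])
  then obtain r g where r: "strict_mono r" and g: "g \<in> bloch_space"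
    and conv: "(\<lambda>n. bloch_norm (\<lambda>x. F (r n) (\<phi> x) - g x)) \<longlonglongrightarrow> 0" by blast
  define H where "H n = (\<lambda>x. F (r n) (\<phi> x) - g x)" for n
  have hg: "hol_fun g" using g by (simp add: bloch_space_def)
  have hF: "hol_fun (\<lambda>x. F j (\<phi> x))" for j
    using cc1[OF Fb[of j]] by (simp add: bloch_space_def comp_def)
  have hH: "hol_fun (H n)" for n unfolding H_def by (rule hol_diff[OF hF hg])
  have ev: "\<forall>\<^sub>F n in sequentially. bloch_norm (H n) < ereal e" if "e > 0" for e
    using order_tendstoD(2)[OF conv, of "ereal e"] that by (simp add: H_def zero_ereal_def)
  have split: "inv_norm (H n) \<le> ereal e \<and> cmod (H n zerovec) \<le> e" if "bloch_norm (H n) < ereal e" for n e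
    using ereal_split[of "cmod (H n zerovec)" "inv_norm (H n)" e] that inv_nonneg[of "H n"]
    by (simp add: bloch_norm_def)
  have Hx: "(\<lambda>n. H n x) \<longlonglongrightarrow> 0" if x: "x \<in> BE" for x
  proof (rule LIMSEQ_I)
    fix e :: real assume e: "e > 0"
    have n1: "(l2norm x)\<^sup>2 < 1" using norm_sq_lt1[OF x] .
    define K where "K = 1 + 1 / (1 - (l2norm x)\<^sup>2)"
    have K: "K > 0" using n1 by (simp add: K_def add_pos_pos)
    obtain N where N: "\<forall>n\<ge>N. bloch_norm (H n) < ereal (e / (2 * K))"
      using ev[of "e / (2 * K)"] e K by (auto simp: eventually_sequentially)
    show "\<exists>no. \<forall>n\<ge>no. norm (H n x - 0) < e"
    proof (intro exI[of _ N] allI impI)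
      fix n assume n: "n \<ge> N"
      have s: "inv_norm (H n) \<le> ereal (e / (2 * K))" "cmod (H n zerovec) \<le> e / (2 * K)"
        using split N n by blast+
      have "cmod (H n x - H n zerovec) \<le> (e / (2 * K)) / (1 - (l2norm x)\<^sup>2)"
        by (rule pointwise_bound[OF hH x s(1)])
      then have "cmod (H n x) \<le> (e / (2 * K)) / (1 - (l2norm x)\<^sup>2) + e / (2 * K)"
        using s(2) norm_triangle_ineq2[of "H n x" "H n zerovec"] by linarith
      also have "\<dots> = (e / (2 * K)) * (1 + 1 / (1 - (l2norm x)\<^sup>2))"
        by (simp only: distrib_left mult_1_right times_divide_eq_right add.commute)
      also have "\<dots> = (e / (2 * K)) * K" by (simp only: K_def)
      also have "\<dots> = e / 2" using K by simp
      finally show "norm (H n x - 0) < e" using e by simp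
    qed
  qed
  have g0: "g x = 0" if x: "x \<in> BE" for x
  proof -
    have A: "(\<lambda>n. F (r n) (\<phi> x)) \<longlonglongrightarrow> 0"
      using LIMSEQ_subseq_LIMSEQ[OF pw[OF x] r] by (simp add: F_def comp_def)
    have "(\<lambda>n. F (r n) (\<phi> x) - H n x) \<longlonglongrightarrow> 0 - 0" by (rule tendsto_diff[OF A Hx[OF x]])
    moreover have "(\<lambda>n. F (r n) (\<phi> x) - H n x) = (\<lambda>n. g x)" by (simp add: H_def)
    ultimately show ?thesis by (simp add: LIMSEQ_const_iff)
  qed
  have gr: "grad (\<lambda>x. F (r n) (\<phi> x)) z = grad (H n) z" if z: "z \<in> BE" for n z
  proof -
    have "grad (H n) z = vsub (grad (\<lambda>x. F (r n) (\<phi> x)) z) (grad g z)"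
      unfolding H_def by (rule grad_diff[OF hF hg z])
    also have "grad g z = zerovec" by (rule grad_vanish[OF g0 z])
    finally show ?thesis by (simp add: vsub_def zerovec_def)
  qed
  have main: "\<forall>e>0. \<exists>N. \<forall>z\<in>BE. (1 - (l2norm z)\<^sup>2) * l2norm (grad (\<lambda>x. G (r N) (\<phi> x (kk (r N)))) z) \<le> e"
  proof (intro allI impI)
    fix e :: real assume e: "e > 0"
    obtain N where N: "bloch_norm (H N) < ereal e"
      using ev[OF e] by (auto simp: eventually_sequentially)
    have iv: "inv_norm (H N) \<le> ereal e" using split[OF N] by blast
    show "\<exists>N. \<forall>z\<in>BE. (1 - (l2norm z)\<^sup>2) * l2norm (grad (\<lambda>x. G (r N) (\<phi> x (kk (r N)))) z) \<le> e"
    proof (intro exI[of _ N] ballI)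
      fix z :: "'g vec" assume z: "z \<in> BE"
      have "ereal ((1 - (l2norm z)\<^sup>2) * l2norm (grad (H N) z)) \<le> ereal e"
        using inv_lower[OF hH z] iv by (rule order_trans)
      then show "(1 - (l2norm z)\<^sup>2) * l2norm (grad (\<lambda>x. G (r N) (\<phi> x (kk (r N)))) z) \<le> e"
        using gr[OF z, of N] by (simp add: F_def)
    qed
  qed
  show ?thesis using r main by blast
qed


lemma slice_norm: "l2norm (smul t (basis_vec l)) = cmod t"
  by (simp add: l2norm_smul)

lemma slice_deriv2:
  assumes h: "hol_fun h" and t: "cmod t < 1"
  shows "((\<lambda>s. h (smul s (basis_vec l))) has_field_derivative cnj (grad h (smul t (basis_vec l)) l)) (at t)"
proof -
  have tb: "smul t (basis_vec l) \<in> BE" using smul_basis_BE[OF t] .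
  show ?thesis using slice_deriv[OF hol_grad[OF h tb] is_l2_basis] by simp
qed

lemma slice_hol:
  assumes h: "hol_fun h"
  shows "(\<lambda>s. h (smul s (basis_vec l))) holomorphic_on ball 0 1"
  unfolding holomorphic_on_open[OF open_ball] using slice_deriv2[OF h] by (metis mem_ball_0)

lemma slice_pt:
  assumes h: "hol_fun h" and t: "t \<in> ball 0 1"
  shows "(1 - (cmod t)\<^sup>2) * cmod (deriv (\<lambda>s. h (smul s (basis_vec l))) t)
       \<le> (1 - (l2norm (smul t (basis_vec l)))\<^sup>2) * l2norm (grad h (smul t (basis_vec l)))"
proof -
  have t1: "cmod t < 1" using t by simp
  have tb: "smul t (basis_vec l) \<in> BE" using smul_basis_BE[OF t1] .
  have lg: "is_l2 (grad h (smul t (basis_vec l)))" using hol_grad[OF h tb] by (simp add: fr_def)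
  have d: "deriv (\<lambda>s. h (smul s (basis_vec l))) t = cnj (grad h (smul t (basis_vec l)) l)"
    using slice_deriv2[OF h t1] DERIV_imp_deriv by blast
  have c: "cmod (cnj (grad h (smul t (basis_vec l)) l)) \<le> l2norm (grad h (smul t (basis_vec l)))"
    using comp_le[OF lg] by simp
  have t2: "(cmod t)\<^sup>2 < 1" using t1 by (simp add: abs_square_less_1)
  show ?thesis unfolding d slice_norm using c t2 by (intro mult_left_mono) auto
qed

lemma slice_semi:
  assumes h: "hol_fun h"
  shows "cbloch_semi (\<lambda>s. h (smul s (basis_vec l))) \<le> bloch_semi h"
  unfolding cbloch_semi_def
proof (rule SUP_least)
  fix t :: complex assume t: "t \<in> ball 0 1"
  have tb: "smul t (basis_vec l) \<in> BE" using smul_basis_BE[of t l] t by simp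
  have "ereal ((1 - (l2norm (smul t (basis_vec l)))\<^sup>2) * l2norm (grad h (smul t (basis_vec l)))) \<le> bloch_semi h"
    unfolding bloch_semi_def using tb by (rule SUP_upper2) simp
  then show "ereal ((1 - (cmod t)\<^sup>2) * cmod (deriv (\<lambda>s. h (smul s (basis_vec l))) t)) \<le> bloch_semi h"
    using slice_pt[OF h t] by (meson ereal_less_eq(3) order_trans)
qed

lemma slice_inv:
  assumes h: "hol_fun h"
  shows "cbloch_semi (\<lambda>s. h (smul s (basis_vec l))) \<le> inv_norm h"
  unfolding cbloch_semi_def
proof (rule SUP_least)
  fix t :: complex assume t: "t \<in> ball 0 1"
  have tb: "smul t (basis_vec l) \<in> BE" using smul_basis_BE[of t l] t by simp
  show "ereal ((1 - (cmod t)\<^sup>2) * cmod (deriv (\<lambda>s. h (smul s (basis_vec l))) t)) \<le> inv_norm h"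
    using slice_pt[OF h t] inv_lower[OF h tb] by (meson ereal_less_eq(3) order_trans)
qed

lemma slice_norm_le:
  assumes h: "hol_fun h"
  shows "cbloch_norm (\<lambda>s. h (smul s (basis_vec l))) \<le> bloch_norm h"
  unfolding cbloch_norm_def bloch_norm_def
  using slice_inv[OF h, of l] by (simp add: add_left_mono)

lemma cbloch_nonneg: "cbloch_semi F \<ge> 0"
  unfolding cbloch_semi_def by (rule SUP_upper2[of 0]) auto

lemma cbloch_norm_nonneg: "cbloch_norm F \<ge> 0"
  unfolding cbloch_norm_def using cbloch_nonneg[of F] by (simp add: add_nonneg_nonneg)

lemma fin_lt: "(x::ereal) \<le> y \<Longrightarrow> y < \<infinity> \<Longrightarrow> x < \<infinity>"
  by (rule le_less_trans)

lemma part_a: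
  fixes \<phi> :: "'g vec \<Rightarrow> 'g vec"
  assumes hs: "hol_selfmap \<phi>" and cc: "compact_comp_op \<phi>"
  shows "compact_ccomp_op (\<lambda>t. \<phi> (smul t (basis_vec l)) k)"
proof -
  let ?\<psi> = "\<lambda>t. \<phi> (smul t (basis_vec l)) k"
  have cc1: "\<And>f. f \<in> bloch_space \<Longrightarrow> f \<circ> \<phi> \<in> bloch_space"
    using cc[unfolded compact_comp_op_def, THEN conjunct1] by (rule bspec)
  have ext: "(\<lambda>x. F (x k)) \<in> bloch_space" if F: "F \<in> cbloch_space" for F
  proof -
    have hF: "F holomorphic_on ball 0 1" and fF: "cbloch_semi F < \<infinity>" using F by (auto simp: cbloch_space_def)
    show ?thesis using coord_hol[OF hF] fin_lt[OF coord_semi[OF hF, of k] fF] by (simp add: bloch_space_def)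
  qed
  have restr: "(\<lambda>s. h (smul s (basis_vec l))) \<in> cbloch_space" if h: "h \<in> bloch_space" for h
  proof -
    have hh: "hol_fun h" and fh: "bloch_semi h < \<infinity>" using h by (auto simp: bloch_space_def)
    show ?thesis using slice_hol[OF hh] fin_lt[OF slice_semi[OF hh, of l] fh] by (simp add: cbloch_space_def)
  qed
  have C1: "\<forall>F\<in>cbloch_space. F \<circ> ?\<psi> \<in> cbloch_space"
  proof
    fix F assume F: "F \<in> cbloch_space"
    have "(\<lambda>x. F (x k)) \<circ> \<phi> \<in> bloch_space" using cc1[OF ext[OF F]] .
    from restr[OF this] show "F \<circ> ?\<psi> \<in> cbloch_space" by (simp add: comp_def)
  qed
  have C2: "\<exists>r G. strict_mono r \<and> G \<in> cbloch_space \<and>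
           (\<lambda>n. cbloch_norm (\<lambda>z. Fs (r n) (?\<psi> z) - G z)) \<longlonglongrightarrow> 0"
    if Fs: "\<forall>n. Fs n \<in> cbloch_space" and Cb: "\<exists>C. \<forall>n. cbloch_norm (Fs n) \<le> ereal C"
    for Fs :: "nat \<Rightarrow> complex \<Rightarrow> complex"
  proof -
    obtain C where C: "\<forall>n. cbloch_norm (Fs n) \<le> ereal C" using Cb by blast
    define f where "f n = (\<lambda>x::'g vec. Fs n (x k))" for n
    have fb: "f n \<in> bloch_space" for n using ext Fs by (simp add: f_def)
    have fn: "bloch_norm (f n) \<le> ereal C" for n
    proof -
      have hF: "Fs n holomorphic_on ball 0 1" using Fs by (simp add: cbloch_space_def)
      have "bloch_norm (f n) \<le> cbloch_norm (Fs n)"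
        unfolding bloch_norm_def cbloch_norm_def f_def
        using coord_inv[OF hF, of k] by (simp add: zerovec_def add_left_mono)
      then show ?thesis using C order_trans by blast
    qed
    have ex1: "\<exists>C. \<forall>n. bloch_norm (f n) \<le> ereal C" using fn by blast
    have "\<exists>r g. strict_mono r \<and> g \<in> bloch_space \<and>
           (\<lambda>n. bloch_norm (\<lambda>x. f (r n) (\<phi> x) - g x)) \<longlonglongrightarrow> 0"
      by (rule cc[unfolded compact_comp_op_def, THEN conjunct2, rule_format, OF fb ex1])
    then obtain r g where r: "strict_mono r" and g: "g \<in> bloch_space"
      and conv: "(\<lambda>n. bloch_norm (\<lambda>x. f (r n) (\<phi> x) - g x)) \<longlonglongrightarrow> 0" by blast
    define G where "G = (\<lambda>s. g (smul s (basis_vec l)))"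
    have Gb: "G \<in> cbloch_space" unfolding G_def by (rule restr[OF g])
    have hg: "hol_fun g" using g by (simp add: bloch_space_def)
    have hf: "hol_fun (\<lambda>x. f j (\<phi> x))" for j using cc1[OF fb[of j]] by (simp add: bloch_space_def comp_def)
    have hH: "hol_fun (\<lambda>x. f (r n) (\<phi> x) - g x)" for n by (rule hol_diff[OF hf hg])
    have eqf: "(\<lambda>z. Fs (r n) (?\<psi> z) - G z) = (\<lambda>s. (\<lambda>x. f (r n) (\<phi> x) - g x) (smul s (basis_vec l)))" for n
      by (simp add: f_def G_def)
    have le: "cbloch_norm (\<lambda>z. Fs (r n) (?\<psi> z) - G z) \<le> bloch_norm (\<lambda>x. f (r n) (\<phi> x) - g x)" for n
      unfolding eqf by (rule slice_norm_le[OF hH])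
    have "(\<lambda>n. cbloch_norm (\<lambda>z. Fs (r n) (?\<psi> z) - G z)) \<longlonglongrightarrow> 0"
      by (rule tendsto_sandwich[OF _ _ tendsto_const conv]) (auto simp: le cbloch_norm_nonneg)
    then show ?thesis using r Gb by blast
  qed
  show ?thesis unfolding compact_ccomp_op_def using C1 C2 by blast
qed


lemma phi_comp_lt1:
  assumes hs: "hol_selfmap \<phi>" and z: "z \<in> BE"
  shows "cmod (\<phi> z k) < 1"
proof -
  have pz: "\<phi> z \<in> BE" by (rule selfmap_BE[OF hs z])
  have "cmod (\<phi> z k) \<le> l2norm (\<phi> z)" using BE_D[OF pz] by (intro comp_le) blast
  then show ?thesis using BE_D[OF pz] by linarith
qed

lemma quot_nonneg:
  assumes hs: "hol_selfmap \<phi>" and z: "z \<in> BE"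
  shows "quot \<phi> k z \<ge> 0"
proof -
  have a: "cmod (\<phi> z k) < 1" by (rule phi_comp_lt1[OF hs z])
  have "(cmod (\<phi> z k))\<^sup>2 < 1" using a by (simp add: abs_square_less_1)
  moreover have "(l2norm z)\<^sup>2 < 1" by (rule norm_sq_lt1[OF z])
  ultimately show ?thesis unfolding quot_def by (intro divide_nonneg_pos mult_nonneg_nonneg) auto
qed

lemma quot_G:
  fixes \<phi> :: "'g vec \<Rightarrow> 'g vec"
  assumes hs: "hol_selfmap \<phi>" and z: "z \<in> BE"
  shows "quot \<phi> k z \<le> (1 - (l2norm z)\<^sup>2) * l2norm (grad (\<lambda>x. Gw (\<phi> z k) (\<phi> x k)) z)"
proof -
  define w where "w = \<phi> z k"
  define p where "p = (\<lambda>x. \<phi> x k)"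
  have hp: "hol_fun p" unfolding p_def by (rule selfmap_coord_fr[OF hs])
  have fp: "fr p z (grad p z)" by (rule hol_grad[OF hp z])
  have w1: "cmod w < 1" unfolding w_def by (rule phi_comp_lt1[OF hs z])
  have w2: "(cmod w)\<^sup>2 < 1" using w1 by (simp add: abs_square_less_1)
  define D where "D = deriv (Gw w) w"
  have DD: "(Gw w has_field_derivative D) (at (p z))"
    using holomorphic_derivI[OF Gw_hol[OF w1] open_ball, of w UNIV] w1 by (simp add: D_def p_def w_def)
  have fc: "fr (\<lambda>x. Gw w (p x)) z (smul (cnj D) (grad p z))" by (rule fr_chain[OF fp DD])
  have gr: "grad (\<lambda>x. Gw w (p x)) z = smul (cnj D) (grad p z)" by (rule grad_eq[OF fc])
  have lg: "is_l2 (grad p z)" using fp by (simp add: fr_def)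
  have lg2: "is_l2 (grad (\<lambda>x. Gw w (p x)) z)" using gr lg by simp
  have nD: "cmod D = 1 / (1 - (cmod w)\<^sup>2)" unfolding D_def by (rule Gw_at_w[OF w1])
  have "quot \<phi> k z = (1 - (l2norm z)\<^sup>2) * cmod (radial p z) / (1 - (cmod w)\<^sup>2)"
    by (simp add: quot_def p_def w_def)
  also have "\<dots> = (1 - (l2norm z)\<^sup>2) * (cmod D * cmod (radial p z))"
    using nD by simp
  also have "cmod D * cmod (radial p z) = cmod (l2inner z (grad (\<lambda>x. Gw w (p x)) z))"
    unfolding gr radial_def using lg BE_D[OF z] by (simp add: l2inner_smul_right norm_mult)
  also have "(1 - (l2norm z)\<^sup>2) * \<dots> \<le> (1 - (l2norm z)\<^sup>2) * l2norm (grad (\<lambda>x. Gw w (p x)) z)"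
    using radial_bound[OF z lg2] norm_sq_lt1[OF z] by (intro mult_left_mono) auto
  finally show ?thesis by (simp add: w_def p_def)
qed

lemma gw_hyps:
  assumes w: "\<And>j. cmod (ww j) < 1"
  shows "\<And>j. Gw (ww j) holomorphic_on ball 0 1"
    and "\<And>j. Gw (ww j) 0 = 0"
    and "\<And>j t. t \<in> ball 0 1 \<Longrightarrow> (1 - (cmod t)\<^sup>2) * cmod (deriv (Gw (ww j)) t) \<le> 1"
  using Gw_hol[OF w] Gw_bound[OF w] by auto

lemma null_cmp:
  assumes "\<And>j. cmod (f j) \<le> g j" "g \<longlonglongrightarrow> 0"
  shows "f \<longlonglongrightarrow> (0::complex)"
  by (rule Lim_null_comparison[OF _ assms(2)]) (use assms(1) in auto)

lemma part_b_quot: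
  fixes \<phi> :: "'g vec \<Rightarrow> 'g vec"
  assumes hs: "hol_selfmap \<phi>" and cc: "compact_comp_op \<phi>" and ep: "\<epsilon> > 0"
  shows "finite {k. (SUP z\<in>BE. ereal (quot \<phi> k z)) \<ge> ereal \<epsilon>}"
proof (rule ccontr)
  let ?S = "{k. (SUP z\<in>BE. ereal (quot \<phi> k z)) \<ge> ereal \<epsilon>}"
  assume "infinite ?S"
  then obtain kk :: "nat \<Rightarrow> 'g" where kk: "inj kk" "range kk \<subseteq> ?S"
    using infinite_countable_subset by blast
  have "\<forall>j. \<exists>z. z \<in> BE \<and> quot \<phi> (kk j) z > \<epsilon>/2"
  proof
    fix j
    have "kk j \<in> ?S" using kk(2) by auto
    then have ge: "ereal \<epsilon> \<le> (SUP z\<in>BE. ereal (quot \<phi> (kk j) z))" by simp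
    have "ereal (\<epsilon>/2) < ereal \<epsilon>" using ep by simp
    then have "ereal (\<epsilon>/2) < (SUP z\<in>BE. ereal (quot \<phi> (kk j) z))" using ge by (rule order_less_le_trans)
    then show "\<exists>z. z \<in> BE \<and> quot \<phi> (kk j) z > \<epsilon>/2" by (auto simp: less_SUP_iff)
  qed
  then obtain zz where zz: "\<And>j. zz j \<in> BE" "\<And>j. quot \<phi> (kk j) (zz j) > \<epsilon>/2" by metis
  define ww where "ww j = \<phi> (zz j) (kk j)" for j
  have w1: "cmod (ww j) < 1" for j unfolding ww_def by (rule phi_comp_lt1[OF hs zz(1)])
  have pw: "(\<lambda>j. Gw (ww j) (\<phi> x (kk j))) \<longlonglongrightarrow> 0" if x: "x \<in> BE" for x
  proof -
    have px: "is_l2 (\<phi> x)" using BE_D[OF selfmap_BE[OF hs x]] by blast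
    have s0: "(\<lambda>j. \<phi> x (kk j)) \<longlonglongrightarrow> 0" by (rule coord_to_zero[OF kk(1) px])
    have s1: "cmod (\<phi> x (kk j)) < 1" for j by (rule phi_comp_lt1[OF hs x])
    have c0: "(\<lambda>j. cmod (\<phi> x (kk j))) \<longlonglongrightarrow> 0" using tendsto_norm_zero[OF s0] .
    have g0: "(\<lambda>j. cmod (\<phi> x (kk j)) / (1 - cmod (\<phi> x (kk j)))) \<longlonglongrightarrow> 0 / (1 - 0)"
      by (intro tendsto_intros c0) simp
    show ?thesis
    proof (rule null_cmp)
      show "(\<lambda>j. cmod (\<phi> x (kk j)) / (1 - cmod (\<phi> x (kk j)))) \<longlonglongrightarrow> 0" using g0 by simp
      fix j
      have "cmod (Gw (ww j) (\<phi> x (kk j))) \<le> (1 - (cmod (ww j))\<^sup>2) * cmod (\<phi> x (kk j)) / (1 - cmod (\<phi> x (kk j)))"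
        by (rule Gw_small[OF w1 s1])
      also have "\<dots> \<le> 1 * cmod (\<phi> x (kk j)) / (1 - cmod (\<phi> x (kk j)))"
        using s1[of j] by (intro divide_right_mono mult_right_mono) auto
      finally show "cmod (Gw (ww j) (\<phi> x (kk j))) \<le> cmod (\<phi> x (kk j)) / (1 - cmod (\<phi> x (kk j)))" by simp
    qed
  qed
  obtain r :: "nat \<Rightarrow> nat" where r: "strict_mono r" and R: "\<forall>e>0. \<exists>N::nat. \<forall>z\<in>BE.
      (1 - (l2norm z)\<^sup>2) * l2norm (grad (\<lambda>x. Gw (ww (r N)) (\<phi> x (kk (r N)))) z) \<le> e"
    using key[where G="\<lambda>j. Gw (ww j)" and kk=kk, OF hs cc gw_hyps[of ww, OF w1] pw] by blast
  obtain N where N: "\<forall>z\<in>BE. (1 - (l2norm z)\<^sup>2) * l2norm (grad (\<lambda>x. Gw (ww (r N)) (\<phi> x (kk (r N)))) z) \<le> \<epsilon>/2"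
    using R ep by (meson half_gt_zero)
  let ?j = "r N"
  have "quot \<phi> (kk ?j) (zz ?j) \<le> (1 - (l2norm (zz ?j))\<^sup>2) * l2norm (grad (\<lambda>x. Gw (\<phi> (zz ?j) (kk ?j)) (\<phi> x (kk ?j))) (zz ?j))"
    by (rule quot_G[OF hs zz(1)])
  also have "\<dots> \<le> \<epsilon>/2" using N zz(1)[of ?j] by (simp add: ww_def)
  finally show False using zz(2)[of ?j] by simp
qed

lemma part_b_semi:
  fixes \<phi> :: "'g vec \<Rightarrow> 'g vec"
  assumes hs: "hol_selfmap \<phi>" and cc: "compact_comp_op \<phi>" and ep: "\<epsilon> > 0"
  shows "finite {k. bloch_semi (\<lambda>x. \<phi> x k) \<ge> ereal \<epsilon>}"
proof (rule ccontr)
  let ?S = "{k. bloch_semi (\<lambda>x. \<phi> x k) \<ge> ereal \<epsilon>}"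
  assume "infinite ?S"
  then obtain kk :: "nat \<Rightarrow> 'g" where kk: "inj kk" "range kk \<subseteq> ?S"
    using infinite_countable_subset by blast
  have h1: "\<And>j. (\<lambda>t. t) holomorphic_on ball 0 1" by simp
  have h2: "\<And>j. (\<lambda>t::complex. t) 0 = 0" by simp
  have h3: "\<And>j t. t \<in> ball 0 1 \<Longrightarrow> (1 - (cmod t)\<^sup>2) * cmod (deriv (\<lambda>t. t) t) \<le> 1" by simp
  have pw: "(\<lambda>j. (\<lambda>t. t) (\<phi> x (kk j))) \<longlonglongrightarrow> 0" if x: "x \<in> BE" for x
  proof -
    have px: "is_l2 (\<phi> x)" using BE_D[OF selfmap_BE[OF hs x]] by blast
    show ?thesis using coord_to_zero[OF kk(1) px] by simp
  qed
  obtain r :: "nat \<Rightarrow> nat" where r: "strict_mono r" and R: "\<forall>e>0. \<exists>N::nat. \<forall>z\<in>BE.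
      (1 - (l2norm z)\<^sup>2) * l2norm (grad (\<lambda>x. (\<lambda>t. t) (\<phi> x (kk (r N)))) z) \<le> e"
    using key[where G="\<lambda>j t. t" and kk=kk, OF hs cc h1 h2 h3 pw] by blast
  obtain N where N: "\<forall>z\<in>BE. (1 - (l2norm z)\<^sup>2) * l2norm (grad (\<lambda>x. \<phi> x (kk (r N))) z) \<le> \<epsilon>/2"
    using R ep by (metis half_gt_zero)
  have "bloch_semi (\<lambda>x. \<phi> x (kk (r N))) \<le> ereal (\<epsilon>/2)"
    unfolding bloch_semi_def by (rule SUP_least) (use N in auto)
  moreover have "ereal (\<epsilon>/2) < ereal \<epsilon>" using ep by simp
  moreover have "bloch_semi (\<lambda>x. \<phi> x (kk (r N))) \<ge> ereal \<epsilon>" using kk(2) by auto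
  ultimately have "ereal \<epsilon> \<le> ereal (\<epsilon>/2)" by (meson order_trans)
  then show False using ep by simp
qed

lemma part_c:
  fixes \<phi> :: "'g vec \<Rightarrow> 'g vec"
  assumes hs: "hol_selfmap \<phi>" and cc: "compact_comp_op \<phi>" and ep: "\<epsilon> > 0"
  shows "\<exists>r<1. \<forall>z\<in>BE. cmod (\<phi> z n) > r \<longrightarrow> \<bar>quot \<phi> n z\<bar> < \<epsilon>"
proof (rule ccontr)
  assume H: "\<not> (\<exists>r<1. \<forall>z\<in>BE. cmod (\<phi> z n) > r \<longrightarrow> \<bar>quot \<phi> n z\<bar> < \<epsilon>)"
  have "\<forall>j. \<exists>z. z \<in> BE \<and> cmod (\<phi> z n) > 1 - inverse (real (Suc j)) \<and> \<bar>quot \<phi> n z\<bar> \<ge> \<epsilon>"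
  proof
    fix j :: nat
    have "1 - inverse (real (Suc j)) < 1" by simp
    then show "\<exists>z. z \<in> BE \<and> cmod (\<phi> z n) > 1 - inverse (real (Suc j)) \<and> \<bar>quot \<phi> n z\<bar> \<ge> \<epsilon>"
      using H by (meson not_less)
  qed
  then obtain zz where zz: "\<And>j. zz j \<in> BE" "\<And>j. cmod (\<phi> (zz j) n) > 1 - inverse (real (Suc j))"
    "\<And>j. \<bar>quot \<phi> n (zz j)\<bar> \<ge> \<epsilon>" by metis
  define ww where "ww j = \<phi> (zz j) n" for j
  have w1: "cmod (ww j) < 1" for j unfolding ww_def by (rule phi_comp_lt1[OF hs zz(1)])
  have wsmall: "1 - (cmod (ww j))\<^sup>2 \<le> 2 * inverse (real (Suc j))" for j
  proof -
    have a: "1 - cmod (ww j) < inverse (real (Suc j))" using zz(2)[of j] by (simp add: ww_def)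
    have "1 - (cmod (ww j))\<^sup>2 = (1 - cmod (ww j)) * (1 + cmod (ww j))" by (simp add: power2_eq_square algebra_simps)
    also have "\<dots> \<le> inverse (real (Suc j)) * 2"
      using a w1[of j] by (intro mult_mono) auto
    finally show ?thesis by simp
  qed
  have pw: "(\<lambda>j. Gw (ww j) (\<phi> x n)) \<longlonglongrightarrow> 0" if x: "x \<in> BE" for x
  proof -
    have s1: "cmod (\<phi> x n) < 1" by (rule phi_comp_lt1[OF hs x])
    let ?c = "cmod (\<phi> x n) / (1 - cmod (\<phi> x n))"
    have c0: "?c \<ge> 0" using s1 by simp
    have g0: "(\<lambda>j. 2 * inverse (real (Suc j)) * ?c) \<longlonglongrightarrow> 2 * 0 * ?c"
      by (intro tendsto_intros LIMSEQ_inverse_real_of_nat)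
    show ?thesis
    proof (rule null_cmp)
      show "(\<lambda>j. 2 * inverse (real (Suc j)) * ?c) \<longlonglongrightarrow> 0" using g0 by simp
      fix j
      have "cmod (Gw (ww j) (\<phi> x n)) \<le> (1 - (cmod (ww j))\<^sup>2) * cmod (\<phi> x n) / (1 - cmod (\<phi> x n))"
        by (rule Gw_small[OF w1 s1])
      also have "\<dots> = (1 - (cmod (ww j))\<^sup>2) * ?c" by simp
      also have "\<dots> \<le> 2 * inverse (real (Suc j)) * ?c"
        using wsmall[of j] c0 by (intro mult_right_mono) auto
      finally show "cmod (Gw (ww j) (\<phi> x n)) \<le> 2 * inverse (real (Suc j)) * ?c" .
    qed
  qed
  have pw': "(\<lambda>j. Gw (ww j) (\<phi> x ((\<lambda>j. n) j))) \<longlonglongrightarrow> 0" if x: "x \<in> BE" for x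
    using pw[OF x] by simp
  obtain r :: "nat \<Rightarrow> nat" where r: "strict_mono r" and R: "\<forall>e>0. \<exists>N::nat. \<forall>z\<in>BE.
      (1 - (l2norm z)\<^sup>2) * l2norm (grad (\<lambda>x. Gw (ww (r N)) (\<phi> x ((\<lambda>j. n) (r N)))) z) \<le> e"
    using key[where G="\<lambda>j. Gw (ww j)" and kk="\<lambda>j. n", OF hs cc gw_hyps[of ww, OF w1] pw'] by blast
  obtain N where N: "\<forall>z\<in>BE. (1 - (l2norm z)\<^sup>2) * l2norm (grad (\<lambda>x. Gw (ww (r N)) (\<phi> x n)) z) \<le> \<epsilon>/2"
    using R ep by (metis half_gt_zero)
  let ?j = "r N"
  have "quot \<phi> n (zz ?j) \<le> (1 - (l2norm (zz ?j))\<^sup>2) * l2norm (grad (\<lambda>x. Gw (\<phi> (zz ?j) n) (\<phi> x n)) (zz ?j))"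
    by (rule quot_G[OF hs zz(1)])
  also have "\<dots> \<le> \<epsilon>/2" using N zz(1)[of ?j] by (simp add: ww_def)
  finally have "quot \<phi> n (zz ?j) \<le> \<epsilon>/2" .
  moreover have "\<bar>quot \<phi> n (zz ?j)\<bar> = quot \<phi> n (zz ?j)" using quot_nonneg[OF hs zz(1)] by simp
  ultimately show False using zz(3)[of ?j] ep by linarith
qed


theorem proposition4p9:
  fixes \<phi> :: "'g vec \<Rightarrow> 'g vec"
  assumes "hol_selfmap \<phi>"
    and "compact_comp_op \<phi>"
  shows "(\<forall>k l. compact_ccomp_op (\<lambda>t. \<phi> (smul t (basis_vec l)) k))
       \<and> (\<forall>\<epsilon>>0. finite {k. (SUP z\<in>BE. ereal (quot \<phi> k z)) \<ge> ereal \<epsilon>})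
       \<and> (\<forall>\<epsilon>>0. finite {k. bloch_semi (\<lambda>x. \<phi> x k) \<ge> ereal \<epsilon>})
       \<and> (\<forall>n. \<forall>\<epsilon>>0. \<exists>r<1. \<forall>z\<in>BE. cmod (\<phi> z n) > r \<longrightarrow> \<bar>quot \<phi> n z\<bar> < \<epsilon>)"
  proof (intro conjI allI impI)
  show "compact_ccomp_op (\<lambda>t. \<phi> (smul t (basis_vec l)) k)" for k l
    by (rule part_a[OF assms])
  show "finite {k. (SUP z\<in>BE. ereal (quot \<phi> k z)) \<ge> ereal \<epsilon>}" if "\<epsilon> > 0" for \<epsilon>
    by (rule part_b_quot[OF assms that])
  show "finite {k. bloch_semi (\<lambda>x. \<phi> x k) \<ge> ereal \<epsilon>}" if "\<epsilon> > 0" for \<epsilon>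
    by (rule part_b_semi[OF assms that])
  show "\<exists>r<1. \<forall>z\<in>BE. cmod (\<phi> z n) > r \<longrightarrow> \<bar>quot \<phi> n z\<bar> < \<epsilon>" if "\<epsilon> > 0" for n \<epsilon>
    by (rule part_c[OF assms that])
qed

end
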